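(* Let $\mathcal{U}=\{u_1,\ldots,u_M\}\subset\mathbb{R}\setminus\{0\}$ be a fixed finite set of $M\ge 1$ distinct nonzero reals, $u_{\min}=\min_m|u_m|$, $u_{\max}=\max_m|u_m|$, and let $\sigma^2>0$ be fixed. For integers $N>k\ge1$, let $x$ be uniformly distributed on $\mathcal{X}_k^N(\mathcal{U})$ and $y=x+\omega$ with $\omega\sim\mathcal{N}(0,\sigma_{N/k}^2I_N)$ independent of $x$, where $\sigma_{N/k}^2=\sigma^2/\log(N/k)$. Let $\hat{x}(y)\in\mathbb{R}^N$ be any estimator of $x$ given $y$. Define $$C_0=\frac{\sigma^2}{u_{\max}^2}\Big(1-\frac{u_{\max}^2}{2\sigma^2}\Big),\qquad C_1=\frac{\sigma^2}{2u_{\max}^2}\Big(1-\frac{u_{\max}^2}{2\sigma^2}\Big)^2+\frac{(u_{\max}-u_{\min}/2)^2}{2\sigma^2}.$$ If $\sigma^2>u_{\max}^2/2$, then $$\liminf_{N\to\infty}\frac{1}{k}\Big(\mathbb{E}[\|x-\hat{x}(y)\|_2^2]-\mathbb{E}[\|x\|_2^2]\Big)\ge 0$$ holds in the limit where $k,N\to\infty$ with $\log k/\log N\to\gamma$, for every $$\gamma<\min\Big\{\frac{C_0}{C_0+\sigma^2/(u_{\max}u_{\min})},\ \frac{C_1}{C_1+3},\ \frac12\Big\}.$$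
   Context: For $v\in\mathbb{R}^N$, $\mathcal{S}_v=\{n: v_n\neq0\}$ is its support. $\mathcal{X}_k^N(\mathcal{U})$ denotes the set of $x\in\mathbb{R}^N$ with $|\mathcal{S}_x|=k$ and $x_n\in\mathcal{U}$ for all $n\in\mathcal{S}_x$. An estimator is any (measurable) function $\hat{x}:\mathbb{R}^N\to\mathbb{R}^N$. *)

theory Defs
  imports "HOL-Probability.Probability"
begin

text \<open>Vectors in R^N are represented as functions nat => real that vanish at indices >= N.\<close>

definition sparse_set :: "real set \<Rightarrow> nat \<Rightarrow> nat \<Rightarrow> (nat \<Rightarrow> real) set" where
  "sparse_set U N k = {x. (\<forall>i. N \<le> i \<longrightarrow> x i = 0) \<and> card {i. i < N \<and> x i \<noteq> 0} = k
      \<and> (\<forall>i<N. x i \<noteq> 0 \<longrightarrow> x i \<in> U)}"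

definition noise_measure :: "nat \<Rightarrow> real \<Rightarrow> (nat \<Rightarrow> real) measure" where
  "noise_measure N v = PiM {..<N} (\<lambda>_. density lborel (normal_density 0 (sqrt v)))"

definition observe :: "nat \<Rightarrow> (nat \<Rightarrow> real) \<Rightarrow> (nat \<Rightarrow> real) \<Rightarrow> (nat \<Rightarrow> real)" where
  "observe N x \<omega> = restrict (\<lambda>i. x i + \<omega> i) {..<N}"

definition mse :: "real set \<Rightarrow> nat \<Rightarrow> nat \<Rightarrow> real \<Rightarrow> ((nat \<Rightarrow> real) \<Rightarrow> (nat \<Rightarrow> real)) \<Rightarrow> ennreal" where
  "mse U N k v xh =
     (\<Sum>x\<in>sparse_set U N k. \<integral>\<^sup>+ \<omega>. ennreal (\<Sum>i<N. (x i - xh (observe N x \<omega>) i)\<^sup>2) \<partial>noise_measure N v)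
       / of_nat (card (sparse_set U N k))"

definition signal_energy :: "real set \<Rightarrow> nat \<Rightarrow> nat \<Rightarrow> real" where
  "signal_energy U N k =
     (\<Sum>x\<in>sparse_set U N k. \<Sum>i<N. (x i)\<^sup>2) / real (card (sparse_set U N k))"

definition excess :: "real set \<Rightarrow> real \<Rightarrow> nat \<Rightarrow> nat \<Rightarrow> ((nat \<Rightarrow> real) \<Rightarrow> (nat \<Rightarrow> real)) \<Rightarrow> ereal" where
  "excess U s2 N k xh =
     (enn2ereal (mse U N k (s2 / ln (real N / real k)) xh) - ereal (signal_energy U N k)) / ereal (real k)"

end

theory Submission
  imports Defs
begin


definition gd :: "real \<Rightarrow> real \<Rightarrow> real" where
  "gd v t = normal_density 0 (sqrt v) t"

definition LL :: "real \<Rightarrow> real \<Rightarrow> real \<Rightarrow> real" where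
  "LL v u t = exp ((u * t - u\<^sup>2 / 2) / v)"

definition P1 :: "real \<Rightarrow> real measure" where
  "P1 v = density lborel (\<lambda>x. ennreal (gd v x))"

lemma gd_nonneg[simp]: "0 \<le> gd v t" by (simp add: gd_def)
lemma gd_meas[measurable]: "gd v \<in> borel_measurable borel" by (simp add: gd_def[abs_def])
lemma LL_meas[measurable]: "LL v u \<in> borel_measurable borel" by (simp add: LL_def[abs_def])
lemma LL_pos: "0 < LL v u t" by (simp add: LL_def)

lemma gd_shift:
  assumes "v > 0" shows "gd v t * LL v u t = gd v (t - u)"
proof -
  have "exp (- t\<^sup>2 / (2 * v)) * exp ((u * t - u\<^sup>2 / 2) / v) = exp (- (t - u)\<^sup>2 / (2 * v))"
    unfolding exp_add[symmetric] using assms by (intro arg_cong[where f=exp]) (simp add: field_simps power2_eq_square)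
  then show ?thesis using assms by (simp add: gd_def LL_def normal_density_def)
qed

lemma prob_P1: "v > 0 \<Longrightarrow> prob_space (P1 v)"
  unfolding P1_def gd_def by (rule prob_space_normal_density) simp

lemma integrable_gd: "v > 0 \<Longrightarrow> integrable lborel (gd v)"
  unfolding gd_def[abs_def] by (rule integrable_normal_density) simp

lemma integral_gd: "v > 0 \<Longrightarrow> integral\<^sup>L lborel (gd v) = 1"
  unfolding gd_def[abs_def] by simp

lemma gd_second_moment: "v > 0 \<Longrightarrow> integral\<^sup>L lborel (\<lambda>t. gd v t * t\<^sup>2) = v"
proof -
  assume v: "v > 0"
  have "integral\<^sup>L lborel (\<lambda>x. normal_density 0 (sqrt v) x * (x - 0)^(2*1)) = fact (2*1) / ((2 / (sqrt v)\<^sup>2)^1 * fact 1)"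
    by (rule integral_normal_moment_even) (use v in simp)
  then show ?thesis using v by (simp add: gd_def power2_eq_square)
qed

lemma gd_second_integrable: "v > 0 \<Longrightarrow> integrable lborel (\<lambda>t. gd v t * t\<^sup>2)"
  using integrable_normal_moment[of "sqrt v" 0 2] by (simp add: gd_def)

lemma tail_real:
  assumes v: "v > 0" and d: "\<delta> > 0"
  shows "integral\<^sup>L lborel (\<lambda>t. gd v t * indicator {t. \<delta> < \<bar>t\<bar>} t) \<le> v / \<delta>\<^sup>2"
proof -
  have "integral\<^sup>L lborel (\<lambda>t. gd v t * indicator {t. \<delta> < \<bar>t\<bar>} t)
      \<le> integral\<^sup>L lborel (\<lambda>t. (gd v t * t\<^sup>2) / \<delta>\<^sup>2)"
  proof (rule integral_mono)
    show "integrable lborel (\<lambda>t. gd v t * indicator {t. \<delta> < \<bar>t\<bar>} t)"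
      by (rule integrable_real_mult_indicator) (auto intro: integrable_gd v)
    show "integrable lborel (\<lambda>t. gd v t * t\<^sup>2 / \<delta>\<^sup>2)"
      using gd_second_integrable[OF v] by simp
    fix t
    show "gd v t * indicator {t. \<delta> < \<bar>t\<bar>} t \<le> gd v t * t\<^sup>2 / \<delta>\<^sup>2"
    proof (cases "\<delta> < \<bar>t\<bar>")
      case True
      then have "\<delta>\<^sup>2 \<le> t\<^sup>2" using d by (metis abs_of_pos less_imp_le power2_abs power_mono)
      then have "1 \<le> t\<^sup>2 / \<delta>\<^sup>2" using d by simp
      then have "gd v t * 1 \<le> gd v t * (t\<^sup>2 / \<delta>\<^sup>2)" by (intro mult_left_mono) auto
      then show ?thesis using True by simp
    qed simp
  qed
  also have "\<dots> = v / \<delta>\<^sup>2" using gd_second_moment[OF v] by simp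
  finally show ?thesis .
qed



lemma integrable_gd_min:
  assumes v: "v > 0" and K: "K \<ge> 0"
  shows "integrable lborel (\<lambda>t. gd v t * min (LL v u t) K)"
proof (rule Bochner_Integration.integrable_bound)
  show "integrable lborel (\<lambda>t. K * gd v t)" using integrable_gd[OF v] by simp
  show "(\<lambda>t. gd v t * min (LL v u t) K) \<in> borel_measurable lborel" by measurable
  show "AE t in lborel. norm (gd v t * min (LL v u t) K) \<le> norm (K * gd v t)"
  proof (intro AE_I2)
    fix t
    have "0 \<le> min (LL v u t) K" "min (LL v u t) K \<le> K" using K LL_pos[of v u t] by auto
    then have "gd v t * min (LL v u t) K \<le> gd v t * K" by (intro mult_left_mono) auto
    then show "norm (gd v t * min (LL v u t) K) \<le> norm (K * gd v t)"
      using \<open>0 \<le> min (LL v u t) K\<close> K by (simp add: abs_mult mult.commute)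
  qed
qed

lemma meanY:
  assumes v: "v > 0" and d: "\<delta> > 0" and K: "exp ((u\<^sup>2 / 2 + \<bar>u\<bar> * \<delta>) / v) \<le> K"
  shows "1 - v / \<delta>\<^sup>2 \<le> integral\<^sup>L lborel (\<lambda>t. gd v t * min (LL v u t) K)"
proof -
  have K0: "K \<ge> 0" using K by (meson exp_ge_zero order_trans)
  have int1: "integrable lborel (\<lambda>t. gd v t * indicator {t. \<delta> < \<bar>t\<bar>} t)"
    by (rule integrable_real_mult_indicator) (auto intro: integrable_gd v)
  have "integral\<^sup>L lborel (\<lambda>t. gd v t * indicator {t. \<bar>t\<bar> \<le> \<delta>} t)
      = integral\<^sup>L lborel (\<lambda>t. gd v t - gd v t * indicator {t. \<delta> < \<bar>t\<bar>} t)"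
    by (intro Bochner_Integration.integral_cong) (auto simp: indicator_def)
  also have "\<dots> = 1 - integral\<^sup>L lborel (\<lambda>t. gd v t * indicator {t. \<delta> < \<bar>t\<bar>} t)"
    using integrable_gd[OF v] int1 integral_gd[OF v] by simp
  finally have e1: "1 - v / \<delta>\<^sup>2 \<le> integral\<^sup>L lborel (\<lambda>t. gd v t * indicator {t. \<bar>t\<bar> \<le> \<delta>} t)"
    using tail_real[OF v d] by simp
  have "integral\<^sup>L lborel (\<lambda>t. gd v (t - u) * indicator {t. \<bar>t - u\<bar> \<le> \<delta>} t)
      = \<bar>1\<bar> *\<^sub>R integral\<^sup>L lborel (\<lambda>x. gd v (u + 1 * x - u) * indicator {t. \<bar>t - u\<bar> \<le> \<delta>} (u + 1 * x))"
    by (rule lborel_integral_real_affine) simp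
  also have "\<dots> = integral\<^sup>L lborel (\<lambda>t. gd v t * indicator {t. \<bar>t\<bar> \<le> \<delta>} t)"
    by (simp add: indicator_def)
  finally have e2: "integral\<^sup>L lborel (\<lambda>t. gd v (t - u) * indicator {t. \<bar>t - u\<bar> \<le> \<delta>} t)
      = integral\<^sup>L lborel (\<lambda>t. gd v t * indicator {t. \<bar>t\<bar> \<le> \<delta>} t)" .
  have int2: "integrable lborel (\<lambda>t. gd v (t - u) * indicator {t. \<bar>t - u\<bar> \<le> \<delta>} t)"
  proof (rule integrable_real_mult_indicator)
    show "{t. \<bar>t - u\<bar> \<le> \<delta>} \<in> sets lborel" by measurable
    have "integrable lborel (\<lambda>x. gd v (u + 1 * x - u))" using integrable_gd[OF v] by simp
    then show "integrable lborel (\<lambda>t. gd v (t - u))"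
      using lborel_integrable_real_affine_iff[of 1 "\<lambda>t. gd v (t - u)" u] by simp
  qed
  have "integral\<^sup>L lborel (\<lambda>t. gd v (t - u) * indicator {t. \<bar>t - u\<bar> \<le> \<delta>} t)
      \<le> integral\<^sup>L lborel (\<lambda>t. gd v t * min (LL v u t) K)"
  proof (rule integral_mono[OF int2 integrable_gd_min[OF v K0]])
    fix t
    show "gd v (t - u) * indicator {t. \<bar>t - u\<bar> \<le> \<delta>} t \<le> gd v t * min (LL v u t) K"
    proof (cases "\<bar>t - u\<bar> \<le> \<delta>")
      case True
      have "u * t - u\<^sup>2 / 2 = u * (t - u) + u\<^sup>2 / 2" by (simp add: algebra_simps power2_eq_square)
      have "u * (t - u) \<le> \<bar>u * (t - u)\<bar>" by (rule abs_ge_self)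
      also have "\<dots> = \<bar>u\<bar> * \<bar>t - u\<bar>" by (rule abs_mult)
      also have "\<dots> \<le> \<bar>u\<bar> * \<delta>" using True by (intro mult_left_mono) auto
      finally have "u * (t - u) + u\<^sup>2 / 2 \<le> u\<^sup>2 / 2 + \<bar>u\<bar> * \<delta>" by simp
      with \<open>u * t - u\<^sup>2 / 2 = u * (t - u) + u\<^sup>2 / 2\<close>
      have "(u * t - u\<^sup>2 / 2) / v \<le> (u\<^sup>2 / 2 + \<bar>u\<bar> * \<delta>) / v"
        using v by (intro divide_right_mono) auto
      then have "LL v u t \<le> exp ((u\<^sup>2 / 2 + \<bar>u\<bar> * \<delta>) / v)" unfolding LL_def by simp
      then have "LL v u t \<le> K" using K by linarith
      then show ?thesis using True gd_shift[OF v, of t u] by (simp add: min_def)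
    next
      case False
      then show ?thesis using K0 LL_pos[of v u t] by simp
    qed
  qed
  then show ?thesis using e1 e2 by simp
qed

lemma exp_neg_bound:
  fixes s :: real
  assumes "0 \<le> s" "s \<le> 1/4" shows "exp (- s) \<le> 1 - 3/4 * s"
proof -
  have "1 + s \<le> exp s" by (rule exp_ge_add_one_self)
  hence "exp (- s) \<le> 1 / (1 + s)" using assms by (simp add: exp_minus field_simps)
  also have "1 / (1 + s) \<le> 1 - s + s\<^sup>2"
  proof -
    have "(1 - s + s\<^sup>2) * (1 + s) = 1 + s^3" by (simp add: algebra_simps power2_eq_square power3_eq_cube)
    moreover have "0 \<le> s^3" using assms by simp
    ultimately have "1 \<le> (1 - s + s\<^sup>2) * (1 + s)" by simp
    then show ?thesis using assms by (simp add: field_simps)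
  qed
  also have "\<dots> \<le> 1 - 3/4 * s"
  proof -
    have "s * s \<le> (1/4) * s" using assms by (intro mult_right_mono) auto
    then show ?thesis by (simp add: power2_eq_square)
  qed
  finally show ?thesis .
qed

lemma chern1_real:
  assumes v: "v > 0" and d: "\<delta> > 0" and K: "exp ((u\<^sup>2 / 2 + \<bar>u\<bar> * \<delta>) / v) \<le> K"
    and vd: "v / \<delta>\<^sup>2 \<le> 1/4"
  shows "integral\<^sup>L lborel (\<lambda>t. gd v t * exp (- (1 / (4 * K)) * min (LL v u t) K)) \<le> 1 - 9/16 * (1 / (4 * K))"
proof -
  have Kp: "K > 0" using K by (meson exp_gt_zero less_le_trans)
  define l where "l = 1 / (4 * K)"
  have l0: "l > 0" using Kp by (simp add: l_def)
  have "integral\<^sup>L lborel (\<lambda>t. gd v t * exp (- l * min (LL v u t) K))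
      \<le> integral\<^sup>L lborel (\<lambda>t. gd v t - 3/4 * l * (gd v t * min (LL v u t) K))"
  proof (rule integral_mono)
    show "integrable lborel (\<lambda>t. gd v t * exp (- l * min (LL v u t) K))"
    proof (rule Bochner_Integration.integrable_bound)
      show "integrable lborel (gd v)" using integrable_gd[OF v] .
      show "(\<lambda>t. gd v t * exp (- l * min (LL v u t) K)) \<in> borel_measurable lborel" by measurable
      show "AE t in lborel. norm (gd v t * exp (- l * min (LL v u t) K)) \<le> norm (gd v t)"
      proof (intro AE_I2)
        fix t
        have "0 \<le> l * min (LL v u t) K" using l0 LL_pos[of v u t] Kp by simp
        then have "exp (- l * min (LL v u t) K) \<le> 1" by simp
        then show "norm (gd v t * exp (- l * min (LL v u t) K)) \<le> norm (gd v t)"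
          by (simp add: abs_mult mult_left_le)
      qed
    qed
    show "integrable lborel (\<lambda>t. gd v t - 3/4 * l * (gd v t * min (LL v u t) K))"
      using integrable_gd[OF v] integrable_gd_min[OF v, of K u] Kp by simp
    fix t
    have "0 \<le> l * min (LL v u t) K" using l0 LL_pos[of v u t] Kp by simp
    moreover have "l * min (LL v u t) K \<le> 1/4" using l0 Kp unfolding l_def
      by (simp add: field_simps min_def)
    ultimately have "exp (- (l * min (LL v u t) K)) \<le> 1 - 3/4 * (l * min (LL v u t) K)"
      by (rule exp_neg_bound)
    then have "gd v t * exp (- (l * min (LL v u t) K)) \<le> gd v t * (1 - 3/4 * (l * min (LL v u t) K))"
      by (intro mult_left_mono) auto
    then show "gd v t * exp (- l * min (LL v u t) K) \<le> gd v t - 3/4 * l * (gd v t * min (LL v u t) K)"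
      by (simp add: algebra_simps)
  qed
  also have "\<dots> = 1 - 3/4 * l * integral\<^sup>L lborel (\<lambda>t. gd v t * min (LL v u t) K)"
    using integrable_gd[OF v] integrable_gd_min[OF v, of K u] Kp integral_gd[OF v] by simp
  also have "\<dots> \<le> 1 - 3/4 * l * (3/4)"
  proof -
    have "3/4 \<le> integral\<^sup>L lborel (\<lambda>t. gd v t * min (LL v u t) K)"
      using meanY[OF v d K] vd by simp
    then show ?thesis using l0 by (simp add: mult_left_mono)
  qed
  finally show ?thesis by (simp add: l_def)
qed



lemma sets_P1[simp, measurable_cong]: "sets (P1 v) = sets borel"
  by (simp add: P1_def)

lemma noise_eq: "noise_measure N v = PiM {..<N} (\<lambda>_. P1 v)"
  by (simp add: noise_measure_def P1_def gd_def[abs_def])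

lemma psf_P1: "v > 0 \<Longrightarrow> product_sigma_finite (\<lambda>_::nat. P1 v)"
  unfolding product_sigma_finite_def
  using prob_P1 prob_space_imp_sigma_finite by blast

lemma prob_noise: "v > 0 \<Longrightarrow> prob_space (noise_measure N v)"
proof -
  assume v: "v > 0"
  interpret product_prob_space "\<lambda>_::nat. P1 v" "{..<N}"
    by (simp add: product_prob_space_def product_sigma_finite_def product_prob_space_axioms_def prob_P1 v prob_space_imp_sigma_finite)
  show ?thesis unfolding noise_eq by (rule P.prob_space_axioms)
qed

lemma noise_prod:
  assumes v: "v > 0" and f: "\<And>j. j < N \<Longrightarrow> f j \<in> borel_measurable borel"
  shows "(\<integral>\<^sup>+\<omega>. (\<Prod>j<N. f j (\<omega> j)) \<partial>noise_measure N v) = (\<Prod>j<N. \<integral>\<^sup>+t. f j t \<partial>P1 v)"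
proof -
  interpret product_sigma_finite "\<lambda>_::nat. P1 v" using psf_P1[OF v] .
  show ?thesis unfolding noise_eq
    by (rule product_nn_integral_prod) (use f in \<open>auto simp: measurable_cong_sets[OF sets_P1 refl]\<close>)
qed

lemma P1_nn_real:
  assumes v: "v > 0" and f[measurable]: "f \<in> borel_measurable borel" and nn: "\<And>t. 0 \<le> f t"
    and int: "integrable lborel (\<lambda>t. gd v t * f t)"
  shows "(\<integral>\<^sup>+t. ennreal (f t) \<partial>P1 v) = ennreal (integral\<^sup>L lborel (\<lambda>t. gd v t * f t))"
proof -
  have "(\<integral>\<^sup>+t. ennreal (f t) \<partial>P1 v) = (\<integral>\<^sup>+t. ennreal (gd v t) * ennreal (f t) \<partial>lborel)"
    unfolding P1_def by (subst nn_integral_density) auto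
  also have "\<dots> = (\<integral>\<^sup>+t. ennreal (gd v t * f t) \<partial>lborel)"
    by (intro nn_integral_cong) (simp add: ennreal_mult nn)
  also have "\<dots> = ennreal (integral\<^sup>L lborel (\<lambda>t. gd v t * f t))"
    using int nn by (intro nn_integral_eq_integral) auto
  finally show ?thesis .
qed

lemma tail_P1:
  assumes v: "v > 0" and d: "\<delta> > 0"
  shows "(\<integral>\<^sup>+t. indicator {t. \<delta> < \<bar>t\<bar>} t \<partial>P1 v) \<le> ennreal (v / \<delta>\<^sup>2)"
proof -
  have "(\<integral>\<^sup>+t. indicator {t. \<delta> < \<bar>t\<bar>} t \<partial>P1 v) = (\<integral>\<^sup>+t. ennreal (indicator {t. \<delta> < \<bar>t\<bar>} t) \<partial>P1 v)"
    by (simp add: ennreal_indicator)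
  also have "\<dots> = ennreal (integral\<^sup>L lborel (\<lambda>t. gd v t * indicator {t. \<delta> < \<bar>t\<bar>} t))"
    by (rule P1_nn_real[OF v]) (auto intro!: integrable_real_mult_indicator integrable_gd v)
  also have "\<dots> \<le> ennreal (v / \<delta>\<^sup>2)" using tail_real[OF v d] by (simp add: ennreal_leI)
  finally show ?thesis .
qed

lemma chern_P1:
  assumes v: "v > 0" and d: "\<delta> > 0" and K: "exp ((u\<^sup>2 / 2 + \<bar>u\<bar> * \<delta>) / v) \<le> K"
    and vd: "v / \<delta>\<^sup>2 \<le> 1/4"
  shows "(\<integral>\<^sup>+t. ennreal (exp (- (1 / (4 * K)) * min (LL v u t) K)) \<partial>P1 v) \<le> ennreal (1 - 9/16 * (1 / (4 * K)))"
proof -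
  have Kp: "K > 0" using K by (meson exp_gt_zero less_le_trans)
  have "(\<integral>\<^sup>+t. ennreal (exp (- (1 / (4 * K)) * min (LL v u t) K)) \<partial>P1 v)
     = ennreal (integral\<^sup>L lborel (\<lambda>t. gd v t * exp (- (1 / (4 * K)) * min (LL v u t) K)))"
  proof (rule P1_nn_real[OF v])
    show "integrable lborel (\<lambda>t. gd v t * exp (- (1 / (4 * K)) * min (LL v u t) K))"
    proof (rule Bochner_Integration.integrable_bound)
      show "integrable lborel (gd v)" using integrable_gd[OF v] .
      show "(\<lambda>t. gd v t * exp (- (1 / (4 * K)) * min (LL v u t) K)) \<in> borel_measurable lborel" by measurable
      show "AE t in lborel. norm (gd v t * exp (- (1 / (4 * K)) * min (LL v u t) K)) \<le> norm (gd v t)"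
      proof (intro AE_I2)
        fix t
        have "0 \<le> (1 / (4 * K)) * min (LL v u t) K" using LL_pos[of v u t] Kp by simp
        then have "exp (- (1 / (4 * K)) * min (LL v u t) K) \<le> 1" by simp
        then show "norm (gd v t * exp (- (1 / (4 * K)) * min (LL v u t) K)) \<le> norm (gd v t)"
          by (simp add: abs_mult mult_left_le)
      qed
    qed
  qed auto
  also have "\<dots> \<le> ennreal (1 - 9/16 * (1 / (4 * K)))"
    using chern1_real[OF v d K vd] by (simp add: ennreal_leI)
  finally show ?thesis .
qed

lemma prod_delta_ennreal: "i \<in> A \<Longrightarrow> finite A \<Longrightarrow> (\<Prod>j\<in>A. if j = i then a else (1::ennreal)) = a"
  by (simp add: prod.delta)

lemma tail_noise:
  assumes v: "v > 0" and d: "\<delta> > 0" and i: "i < N"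
  shows "(\<integral>\<^sup>+\<omega>. indicator {\<omega>. \<delta> < \<bar>\<omega> i\<bar>} \<omega> \<partial>noise_measure N v) \<le> ennreal (v / \<delta>\<^sup>2)"
proof -
  define f where "f j t = (if j = i then indicator {t. \<delta> < \<bar>t\<bar>} t else (1::ennreal))" for j t
  have "(\<integral>\<^sup>+\<omega>. indicator {\<omega>. \<delta> < \<bar>\<omega> i\<bar>} \<omega> \<partial>noise_measure N v) = (\<integral>\<^sup>+\<omega>. (\<Prod>j<N. f j (\<omega> j)) \<partial>noise_measure N v)"
    using i by (intro nn_integral_cong) (simp add: f_def prod.delta indicator_def)
  also have "\<dots> = (\<Prod>j<N. \<integral>\<^sup>+t. f j t \<partial>P1 v)"
    by (rule noise_prod[OF v]) (simp add: f_def)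
  also have "\<dots> = (\<Prod>j<N. if j = i then (\<integral>\<^sup>+t. indicator {t. \<delta> < \<bar>t\<bar>} t \<partial>P1 v) else 1)"
  proof (intro prod.cong refl)
    fix j
    interpret prob_space "P1 v" using prob_P1[OF v] .
    show "(\<integral>\<^sup>+t. f j t \<partial>P1 v) = (if j = i then (\<integral>\<^sup>+t. indicator {t. \<delta> < \<bar>t\<bar>} t \<partial>P1 v) else 1)"
      by (simp add: f_def emeasure_space_1)
  qed
  also have "\<dots> = (\<integral>\<^sup>+t. indicator {t. \<delta> < \<bar>t\<bar>} t \<partial>P1 v)"
    using i by (simp add: prod.delta)
  also have "\<dots> \<le> ennreal (v / \<delta>\<^sup>2)" by (rule tail_P1[OF v d])
  finally show ?thesis .
qed

lemma chern_noise:
  assumes v: "v > 0" and d: "\<delta> > 0" and K: "exp ((u\<^sup>2 / 2 + \<bar>u\<bar> * \<delta>) / v) \<le> K"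
    and vd: "v / \<delta>\<^sup>2 \<le> 1/4" and J: "J \<subseteq> {..<N}"
  shows "(\<integral>\<^sup>+\<omega>. indicator {\<omega>. (\<Sum>j\<in>J. min (LL v u (\<omega> j)) K) < c} \<omega> \<partial>noise_measure N v)
     \<le> ennreal (exp (c / (4 * K)) * (1 - 9/16 * (1 / (4 * K))) ^ card J)"
proof -
  have Kp: "K > 0" using K by (meson exp_gt_zero less_le_trans)
  define l where "l = 1 / (4 * K)"
  have l0: "l > 0" using Kp by (simp add: l_def)
  have finJ: "finite J" using J finite_subset by blast
  define f where "f j t = (if j \<in> J then ennreal (exp (- l * min (LL v u t) K)) else 1)" for j t
  have "(\<integral>\<^sup>+\<omega>. indicator {\<omega>. (\<Sum>j\<in>J. min (LL v u (\<omega> j)) K) < c} \<omega> \<partial>noise_measure N v)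
     \<le> (\<integral>\<^sup>+\<omega>. ennreal (exp (l * c)) * (\<Prod>j<N. f j (\<omega> j)) \<partial>noise_measure N v)"
  proof (intro nn_integral_mono)
    fix \<omega> :: "nat \<Rightarrow> real"
    have "(\<Prod>j<N. f j (\<omega> j)) = (\<Prod>j\<in>J. ennreal (exp (- l * min (LL v u (\<omega> j)) K)))"
      unfolding f_def using J by (subst prod.If_cases) (auto simp: Int_absorb1 finJ)
    also have "\<dots> = ennreal (\<Prod>j\<in>J. exp (- l * min (LL v u (\<omega> j)) K))"
      by (simp add: prod_ennreal)
    also have "(\<Prod>j\<in>J. exp (- l * min (LL v u (\<omega> j)) K)) = exp (- l * (\<Sum>j\<in>J. min (LL v u (\<omega> j)) K))"
      by (simp add: exp_sum[OF finJ] sum_distrib_left sum_negf[symmetric])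
    finally have eq: "(\<Prod>j<N. f j (\<omega> j)) = ennreal (exp (- l * (\<Sum>j\<in>J. min (LL v u (\<omega> j)) K)))" .
    show "indicator {\<omega>. (\<Sum>j\<in>J. min (LL v u (\<omega> j)) K) < c} \<omega> \<le> ennreal (exp (l * c)) * (\<Prod>j<N. f j (\<omega> j))"
    proof (cases "(\<Sum>j\<in>J. min (LL v u (\<omega> j)) K) < c")
      case True
      have "1 \<le> exp (l * c) * exp (- l * (\<Sum>j\<in>J. min (LL v u (\<omega> j)) K))"
        unfolding exp_add[symmetric] using True l0 by (simp add: algebra_simps)
      then show ?thesis unfolding eq using True by (simp add: ennreal_mult[symmetric] ennreal_1[symmetric] ennreal_leI del: ennreal_1)
    qed simp
  qed
  also have "\<dots> = ennreal (exp (l * c)) * (\<integral>\<^sup>+\<omega>. (\<Prod>j<N. f j (\<omega> j)) \<partial>noise_measure N v)"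
  proof (rule nn_integral_cmult)
    show "(\<lambda>\<omega>. \<Prod>j<N. f j (\<omega> j)) \<in> borel_measurable (noise_measure N v)"
      unfolding noise_eq f_def by measurable
  qed
  also have "(\<integral>\<^sup>+\<omega>. (\<Prod>j<N. f j (\<omega> j)) \<partial>noise_measure N v) = (\<Prod>j<N. \<integral>\<^sup>+t. f j t \<partial>P1 v)"
    by (rule noise_prod[OF v]) (simp add: f_def)
  also have "\<dots> \<le> (\<Prod>j<N. if j \<in> J then ennreal (1 - 9/16 * l) else 1)"
  proof (intro prod_mono_ennreal)
    fix j
    interpret prob_space "P1 v" using prob_P1[OF v] .
    show "(\<integral>\<^sup>+t. f j t \<partial>P1 v) \<le> (if j \<in> J then ennreal (1 - 9/16 * l) else 1)"
      using chern_P1[OF v d K vd] by (simp add: f_def emeasure_space_1 l_def)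
  qed
  also have "\<dots> = ennreal (1 - 9/16 * l) ^ card J"
    using J by (subst prod.If_cases) (auto simp: Int_absorb1)
  also have "ennreal (exp (l * c)) * \<dots> = ennreal (exp (c / (4 * K)) * (1 - 9/16 * (1 / (4 * K))) ^ card J)"
  proof -
    have "0 \<le> (u\<^sup>2 / 2 + \<bar>u\<bar> * \<delta>) / v" using v d by simp
    then have "1 \<le> K" using K by (meson one_le_exp_iff order_trans)
    then have "0 \<le> 1 - 9/16 * l" unfolding l_def by (simp add: field_simps)
    then show ?thesis by (simp add: ennreal_mult ennreal_power l_def)
  qed
  finally show ?thesis by (simp add: mult_left_mono)
qed



abbreviation LB :: "nat \<Rightarrow> (nat \<Rightarrow> real) measure" where
  "LB N \<equiv> PiM {..<N} (\<lambda>_. lborel)"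

definition Gx :: "nat \<Rightarrow> real \<Rightarrow> (nat \<Rightarrow> real) \<Rightarrow> (nat \<Rightarrow> real) \<Rightarrow> real" where
  "Gx N v x y = (\<Prod>j<N. gd v (y j - x j))"

lemma space_P1[simp]: "space (P1 v) = UNIV" by (simp add: P1_def)
lemma space_noise: "space (noise_measure N v) = PiE {..<N} (\<lambda>_. UNIV)"
  by (simp add: noise_eq space_PiM)
lemma pre: "observe N x -` PiE {..<N} A \<inter> space (noise_measure N v) = PiE {..<N} (\<lambda>j. {t. x j + t \<in> A j})"
proof (rule set_eqI)
  fix \<omega>
  show "\<omega> \<in> observe N x -` PiE {..<N} A \<inter> space (noise_measure N v) \<longleftrightarrow> \<omega> \<in> PiE {..<N} (\<lambda>j. {t. x j + t \<in> A j})"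
    unfolding space_noise observe_def vimage_def Int_iff mem_Collect_eq restrict_PiE_iff PiE_iff by simp
qed

lemma Gx_nonneg: "0 \<le> Gx N v x y" by (simp add: Gx_def prod_nonneg)

lemma Gx_meas[measurable]: "Gx N v x \<in> borel_measurable (LB N)"
  unfolding Gx_def by measurable

lemma psf_lborel: "product_sigma_finite (\<lambda>_::nat. lborel :: real measure)"
  unfolding product_sigma_finite_def by (simp add: lborel.sigma_finite_measure_axioms)

definition Qm :: "real \<Rightarrow> (nat \<Rightarrow> real) \<Rightarrow> nat \<Rightarrow> real measure" where
  "Qm v x j = density lborel (\<lambda>s. ennreal (gd v (s - x j)))"

lemma sets_Qm[simp, measurable_cong]: "sets (Qm v x j) = sets borel" by (simp add: Qm_def)

lemma prob_Qm: "v > 0 \<Longrightarrow> prob_space (Qm v x j)"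
proof -
  assume v: "v > 0"
  have "(\<lambda>s. ennreal (gd v (s - x j))) = (\<lambda>s. ennreal (normal_density (x j) (sqrt v) s))"
    by (simp add: gd_def normal_density_def)
  then show ?thesis unfolding Qm_def using prob_space_normal_density[of "sqrt v" "x j"] v by simp
qed

lemma psf_Qm: "v > 0 \<Longrightarrow> product_sigma_finite (Qm v x)"
  unfolding product_sigma_finite_def using prob_Qm prob_space_imp_sigma_finite by blast

lemma observe_meas[measurable]: "observe N x \<in> measurable (noise_measure N v) (LB N)"
  unfolding observe_def noise_eq
  by (intro measurable_restrict) measurable

lemma distr_observe:
  assumes v: "v > 0"
  shows "distr (noise_measure N v) (LB N) (observe N x) = PiM {..<N} (Qm v x)"
proof -
  interpret Q: product_sigma_finite "Qm v x" using psf_Qm[OF v] .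
  interpret P: product_sigma_finite "\<lambda>_::nat. P1 v" using psf_P1[OF v] .
  show ?thesis
  proof (rule Q.PiM_eqI)
    show "sets (distr (noise_measure N v) (LB N) (observe N x)) = sets (PiM {..<N} (Qm v x))"
      unfolding sets_distr by (rule sets_PiM_cong) auto
    fix A assume A: "\<And>j. j \<in> {..<N} \<Longrightarrow> A j \<in> sets (Qm v x j)"
    have A': "A j \<in> sets borel" if "j < N" for j using A[of j] that by simp
    have AS: "PiE {..<N} A \<in> sets (LB N)"
      by (rule sets_PiM_I_finite) (use A' in auto)
    have "emeasure (distr (noise_measure N v) (LB N) (observe N x)) (PiE {..<N} A)
        = emeasure (noise_measure N v) (PiE {..<N} (\<lambda>j. {t. x j + t \<in> A j}))"
      by (subst emeasure_distr[OF observe_meas AS]) (simp only: pre)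
    also have "\<dots> = (\<Prod>j<N. emeasure (P1 v) {t. x j + t \<in> A j})"
      unfolding noise_eq
      by (rule P.emeasure_PiM) (use A' in auto)
    also have "\<dots> = (\<Prod>j<N. emeasure (Qm v x j) (A j))"
    proof (intro prod.cong refl)
      fix j assume j: "j \<in> {..<N}"
      then have [measurable]: "A j \<in> sets borel" using A' by simp
      have "emeasure (Qm v x j) (A j) = (\<integral>\<^sup>+s. ennreal (gd v (s - x j)) * indicator (A j) s \<partial>lborel)"
        unfolding Qm_def by (rule emeasure_density) auto
      also have "\<dots> = (\<integral>\<^sup>+s. ennreal (gd v (x j + 1 * s - x j)) * indicator (A j) (x j + 1 * s) \<partial>lborel)"
        using nn_integral_real_affine[of "\<lambda>s. ennreal (gd v (s - x j)) * indicator (A j) s" 1 "x j"] by simp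
      also have "\<dots> = (\<integral>\<^sup>+s. ennreal (gd v s) * indicator {t. x j + t \<in> A j} s \<partial>lborel)"
        by (intro nn_integral_cong) (simp add: indicator_def)
      also have "\<dots> = emeasure (P1 v) {t. x j + t \<in> A j}"
        unfolding P1_def by (rule emeasure_density[symmetric]) auto
      finally show "emeasure (P1 v) {t. x j + t \<in> A j} = emeasure (Qm v x j) (A j)" by simp
    qed
    finally show "emeasure (distr (noise_measure N v) (LB N) (observe N x)) (PiE {..<N} A) = (\<Prod>j\<in>{..<N}. emeasure (Qm v x j) (A j))"
      by simp
  qed simp
qed

lemma density_Gx:
  assumes v: "v > 0"
  shows "density (LB N) (\<lambda>y. ennreal (Gx N v x y)) = PiM {..<N} (Qm v x)"
proof -
  interpret Q: product_sigma_finite "Qm v x" using psf_Qm[OF v] .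
  interpret L: product_sigma_finite "\<lambda>_::nat. lborel :: real measure" by (rule psf_lborel)
  show ?thesis
  proof (rule Q.PiM_eqI)
    show "sets (density (LB N) (\<lambda>y. ennreal (Gx N v x y))) = sets (PiM {..<N} (Qm v x))"
      unfolding sets_density by (rule sets_PiM_cong) auto
    fix A assume A: "\<And>j. j \<in> {..<N} \<Longrightarrow> A j \<in> sets (Qm v x j)"
    have A': "A j \<in> sets borel" if "j < N" for j using A[of j] that by simp
    have "emeasure (density (LB N) (\<lambda>y. ennreal (Gx N v x y))) (PiE {..<N} A)
        = (\<integral>\<^sup>+y. ennreal (Gx N v x y) * indicator (PiE {..<N} A) y \<partial>LB N)"
      by (rule emeasure_density) (use A' in \<open>auto simp: sets_PiM_I_finite\<close>)
    also have "\<dots> = (\<integral>\<^sup>+y. (\<Prod>j<N. ennreal (gd v (y j - x j)) * indicator (A j) (y j)) \<partial>LB N)"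
    proof (rule nn_integral_cong)
      fix y assume y: "y \<in> space (LB N)"
      have ext: "y \<in> extensional {..<N}" using y by (simp add: space_PiM PiE_iff)
      have "indicator (PiE {..<N} A) y = (\<Prod>j<N. indicator (A j) (y j) :: ennreal)"
      proof (cases "\<forall>j<N. y j \<in> A j")
        case True
        then have "y \<in> PiE {..<N} A" using ext by (simp add: PiE_iff)
        then show ?thesis using True by (simp add: indicator_def)
      next
        case False
        then obtain j where j: "j < N" "y j \<notin> A j" by blast
        then have "y \<notin> PiE {..<N} A" by (auto simp: PiE_iff)
        moreover have "(\<Prod>j<N. indicator (A j) (y j) :: ennreal) = 0"
          using j by (intro prod_zero) (auto intro!: bexI[of _ j])
        ultimately show ?thesis by simp
      qed
      then show "ennreal (Gx N v x y) * indicator (PiE {..<N} A) y = (\<Prod>j<N. ennreal (gd v (y j - x j)) * indicator (A j) (y j))"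
        by (simp add: Gx_def prod.distrib prod_ennreal)
    qed
    also have "\<dots> = (\<Prod>j<N. \<integral>\<^sup>+s. ennreal (gd v (s - x j)) * indicator (A j) s \<partial>lborel)"
      by (rule L.product_nn_integral_prod) (use A' in auto)
    also have "\<dots> = (\<Prod>j<N. emeasure (Qm v x j) (A j))"
      by (intro prod.cong refl) (use A' in \<open>auto simp: Qm_def emeasure_density\<close>)
    finally show "emeasure (density (LB N) (\<lambda>y. ennreal (Gx N v x y))) (PiE {..<N} A) = (\<Prod>j\<in>{..<N}. emeasure (Qm v x j) (A j))"
      by simp
  qed simp
qed

lemma CV:
  assumes v: "v > 0" and h[measurable]: "h \<in> borel_measurable (LB N)"
  shows "(\<integral>\<^sup>+\<omega>. h (observe N x \<omega>) \<partial>noise_measure N v) = (\<integral>\<^sup>+y. ennreal (Gx N v x y) * h y \<partial>LB N)"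
proof -
  have "(\<integral>\<^sup>+\<omega>. h (observe N x \<omega>) \<partial>noise_measure N v) = (\<integral>\<^sup>+y. h y \<partial>distr (noise_measure N v) (LB N) (observe N x))"
    by (rule nn_integral_distr[symmetric]) auto
  also have "\<dots> = (\<integral>\<^sup>+y. h y \<partial>density (LB N) (\<lambda>y. ennreal (Gx N v x y)))"
    by (simp add: distr_observe[OF v] density_Gx[OF v])
  also have "\<dots> = (\<integral>\<^sup>+y. ennreal (Gx N v x y) * h y \<partial>LB N)"
    by (rule nn_integral_density) auto
  finally show ?thesis .
qed



lemma finite_sparse: "finite U \<Longrightarrow> finite (sparse_set U N k)"
proof -
  assume U: "finite U"
  have "sparse_set U N k \<subseteq> {f. \<forall>x. (x \<in> {..<N} \<longrightarrow> f x \<in> insert 0 U) \<and> (x \<notin> {..<N} \<longrightarrow> f x = 0)}"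
    unfolding sparse_set_def by auto
  moreover have "finite {f. \<forall>x. (x \<in> {..<N} \<longrightarrow> f x \<in> insert 0 U) \<and> (x \<notin> {..<N} \<longrightarrow> f x = (0::real))}"
    by (rule finite_set_of_finite_funs) (use U in auto)
  ultimately show ?thesis by (rule finite_subset)
qed

lemma sparse_D:
  assumes "x \<in> sparse_set U N k"
  shows "\<And>j. N \<le> j \<Longrightarrow> x j = 0" "card {j. j < N \<and> x j \<noteq> 0} = k" "\<And>j. j < N \<Longrightarrow> x j \<noteq> 0 \<Longrightarrow> x j \<in> U"
  using assms by (auto simp: sparse_set_def)

definition sw :: "nat \<Rightarrow> (nat \<Rightarrow> real) \<Rightarrow> nat \<Rightarrow> (nat \<Rightarrow> real)" where
  "sw i x j = x(i := 0, j := x i)"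

lemma sw_in:
  assumes x: "x \<in> sparse_set U N k" and i: "i < N" "x i \<noteq> 0" and j: "j < N" "x j = 0"
  shows "sw i x j \<in> sparse_set U N k" "sw i x j i = 0" "j \<in> {l. l < N \<and> sw i x j l \<noteq> 0}"
proof -
  have ij: "i \<noteq> j" using i j by auto
  have supp: "{l. l < N \<and> sw i x j l \<noteq> 0} = insert j ({l. l < N \<and> x l \<noteq> 0} - {i})"
    using ij i j by (auto simp: sw_def)
  have fin: "finite {l. l < N \<and> x l \<noteq> 0}" by simp
  have "card {l. l < N \<and> sw i x j l \<noteq> 0} = card ({l. l < N \<and> x l \<noteq> 0} - {i}) + 1"
    unfolding supp using fin j by (subst card_insert_disjoint) auto
  also have "\<dots> = k"
  proof -
    have "i \<in> {l. l < N \<and> x l \<noteq> 0}" using i by simp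
    then have "card {l. l < N \<and> x l \<noteq> 0} > 0" using fin by (auto simp: card_gt_0_iff)
    then show ?thesis using sparse_D(2)[OF x] \<open>i \<in> {l. l < N \<and> x l \<noteq> 0}\<close> fin
      by (subst card_Diff_singleton) auto
  qed
  finally have c: "card {l. l < N \<and> sw i x j l \<noteq> 0} = k" .
  show "sw i x j \<in> sparse_set U N k"
    unfolding sparse_set_def using c sparse_D[OF x] i j ij by (auto simp: sw_def)
  show "sw i x j i = 0" using ij by (simp add: sw_def)
  show "j \<in> {l. l < N \<and> sw i x j l \<noteq> 0}" using i j by (simp add: sw_def)
qed

lemma sw_inj: "i \<noteq> j \<Longrightarrow> x j = 0 \<Longrightarrow> sw i x j = sw i x' j \<Longrightarrow> x' j = 0 \<Longrightarrow> x = x'"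
proof -
  assume a: "i \<noteq> j" "x j = 0" "sw i x j = sw i x' j" "x' j = 0"
  have "x = (sw i x j)(j := 0, i := sw i x j j)" using a(1,2) by (auto simp: sw_def)
  also have "\<dots> = (sw i x' j)(j := 0, i := sw i x' j j)" using a(3) by simp
  also have "\<dots> = x'" using a(1,4) by (auto simp: sw_def)
  finally show ?thesis .
qed

lemma count_sw:
  assumes U: "finite U" and i: "i < N" and F: "\<And>x. 0 \<le> F x"
  shows "(\<Sum>x\<in>{x\<in>sparse_set U N k. x i \<noteq> 0}. \<Sum>j\<in>{j. j < N \<and> x j = 0}. F (sw i x j))
       \<le> real k * (\<Sum>x\<in>{x\<in>sparse_set U N k. x i = 0}. F x)"
proof -
  let ?X = "sparse_set U N k"
  let ?P = "SIGMA x:{x\<in>?X. x i \<noteq> 0}. {j. j < N \<and> x j = 0}"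
  let ?Q = "SIGMA x:{x\<in>?X. x i = 0}. {j. j < N \<and> x j \<noteq> 0}"
  let ?h = "\<lambda>(x, j). (sw i x j, j)"
  have finX: "finite ?X" using finite_sparse[OF U] .
  have finQ: "finite ?Q" using finX by (intro finite_SigmaI) auto
  have inj: "inj_on ?h ?P"
  proof (rule inj_onI)
    fix p q assume p: "p \<in> ?P" and q: "q \<in> ?P" and e: "?h p = ?h q"
    obtain x j where pj: "p = (x, j)" by (cases p)
    obtain x' j' where qj: "q = (x', j')" by (cases q)
    have jj: "j = j'" using e pj qj by simp
    have "i \<noteq> j" using p pj by auto
    moreover have "x j = 0" "x' j = 0" using p q pj qj jj by auto
    moreover have "sw i x j = sw i x' j" using e pj qj jj by simp
    ultimately have "x = x'" using sw_inj by blast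
    then show "p = q" using pj qj jj by simp
  qed
  have sub: "?h ` ?P \<subseteq> ?Q"
  proof
    fix q assume "q \<in> ?h ` ?P"
    then obtain x j where xj: "x \<in> ?X" "x i \<noteq> 0" "j < N" "x j = 0" and q: "q = (sw i x j, j)" by auto
    show "q \<in> ?Q" using sw_in[OF xj(1) i xj(2) xj(3,4)] q by auto
  qed
  have "(\<Sum>x\<in>{x\<in>?X. x i \<noteq> 0}. \<Sum>j\<in>{j. j < N \<and> x j = 0}. F (sw i x j)) = (\<Sum>p\<in>?P. F (fst (?h p)))"
    by (subst sum.Sigma) (auto simp: case_prod_beta intro: finite_subset[OF _ finX])
  also have "\<dots> = (\<Sum>q\<in>?h ` ?P. F (fst q))"
    by (rule sum.reindex[OF inj, symmetric, unfolded comp_def])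
  also have "\<dots> \<le> (\<Sum>q\<in>?Q. F (fst q))"
    by (rule sum_mono2[OF finQ sub]) (simp add: F)
  also have "\<dots> = (\<Sum>x\<in>{x\<in>?X. x i = 0}. \<Sum>j\<in>{j. j < N \<and> x j \<noteq> 0}. F x)"
    by (subst sum.Sigma) (auto simp: case_prod_beta intro: finite_subset[OF _ finX])
  also have "\<dots> = (\<Sum>x\<in>{x\<in>?X. x i = 0}. real k * F x)"
    by (intro sum.cong refl) (use sparse_D(2) in auto)
  also have "\<dots> = real k * (\<Sum>x\<in>{x\<in>?X. x i = 0}. F x)"
    by (simp add: sum_distrib_left)
  finally show ?thesis .
qed



lemma Gx_sw:
  assumes v: "v > 0" and i: "i < N" and j: "j < N" and ij: "i \<noteq> j" and xj: "x j = 0"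
  shows "Gx N v (sw i x j) y * LL v (x i) (y i) = Gx N v x y * LL v (x i) (y j)"
proof -
  define a where "a l = gd v (y l - x l)" for l
  define b where "b l = gd v (y l - sw i x j l)" for l
  have ab: "b l = a l" if "l \<noteq> i" "l \<noteq> j" for l using that by (simp add: a_def b_def sw_def)
  have bi: "b i * LL v (x i) (y i) = a i"
    using gd_shift[OF v, of "y i" "x i"] ij by (simp add: a_def b_def sw_def)
  have bj: "b j = a j * LL v (x i) (y j)"
    using gd_shift[OF v, of "y j" "x i"] xj by (simp add: a_def b_def sw_def)
  have jN: "j \<in> {..<N} - {i}" using j ij by simp
  have split: "prod f {..<N} = f i * (f j * prod f ({..<N} - {i} - {j}))" for f :: "nat \<Rightarrow> real"
    using i jN by (simp add: prod.remove[of "{..<N}" i] prod.remove[of "{..<N} - {i}" j])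
  have rest: "prod b ({..<N} - {i} - {j}) = prod a ({..<N} - {i} - {j})"
    by (intro prod.cong refl ab) auto
  have "Gx N v (sw i x j) y * LL v (x i) (y i) = (b i * LL v (x i) (y i)) * (b j * prod b ({..<N} - {i} - {j}))"
    unfolding Gx_def b_def[symmetric] split by (simp add: algebra_simps)
  also have "\<dots> = Gx N v x y * LL v (x i) (y j)"
    unfolding Gx_def a_def[symmetric] split bi bj rest by (simp add: algebra_simps)
  finally show ?thesis .
qed

definition SS :: "real set \<Rightarrow> nat \<Rightarrow> nat \<Rightarrow> real \<Rightarrow> nat \<Rightarrow> (nat \<Rightarrow> real) \<Rightarrow> real" where
  "SS U N k v i y = (\<Sum>x\<in>{x\<in>sparse_set U N k. x i \<noteq> 0}. Gx N v x y)"
definition TT :: "real set \<Rightarrow> nat \<Rightarrow> nat \<Rightarrow> real \<Rightarrow> nat \<Rightarrow> (nat \<Rightarrow> real) \<Rightarrow> real" where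
  "TT U N k v i y = (\<Sum>x\<in>{x\<in>sparse_set U N k. x i = 0}. Gx N v x y)"

lemma key:
  assumes v: "v > 0" and U: "finite U" and i: "i < N" and K: "K > 0" and k: "1 \<le> k" "k < N"
    and hyi: "\<forall>u\<in>U. LL v u (y i) \<le> K"
    and hsum: "\<forall>u\<in>U. real (N - k) / 2 + real k * K \<le> (\<Sum>j\<in>{..<N} - {i}. min (LL v u (y j)) K)"
  shows "SS U N k v i y \<le> (2 * real k * K / real (N - k)) * TT U N k v i y"
proof -
  let ?X = "sparse_set U N k"
  have n0: "real (N - k) > 0" using k by simp
  have each: "Gx N v x y * (real (N - k) / (2 * K)) \<le> (\<Sum>j\<in>{j. j < N \<and> x j = 0}. Gx N v (sw i x j) y)"
    if x: "x \<in> ?X" "x i \<noteq> 0" for x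
  proof -
    define u where "u = x i"
    have uU: "u \<in> U" using sparse_D(3)[OF x(1) i x(2)] by (simp add: u_def)
    define Z where "Z = {j. j < N \<and> x j = 0}"
    define S' where "S' = {j. j < N \<and> x j \<noteq> 0} - {i}"
    have finZ: "finite Z" "finite S'" by (auto simp: Z_def S'_def)
    have part: "{..<N} - {i} = Z \<union> S'" "Z \<inter> S' = {}" using x(2) by (auto simp: Z_def S'_def)
    have cS': "card S' = k - 1"
      using sparse_D(2)[OF x(1)] i x(2) by (simp add: S'_def card_Diff_singleton)
    have "(\<Sum>j\<in>{..<N} - {i}. min (LL v u (y j)) K) = (\<Sum>j\<in>Z. min (LL v u (y j)) K) + (\<Sum>j\<in>S'. min (LL v u (y j)) K)"
      unfolding part(1) by (rule sum.union_disjoint) (use finZ part(2) in auto)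
    also have "(\<Sum>j\<in>Z. min (LL v u (y j)) K) \<le> (\<Sum>j\<in>Z. LL v u (y j))" by (intro sum_mono) simp
    also have "(\<Sum>j\<in>S'. min (LL v u (y j)) K) \<le> (\<Sum>j\<in>S'. K)" by (intro sum_mono) simp
    also have "(\<Sum>j\<in>S'. K) = real (k - 1) * K" using cS' by simp
    finally have "real (N - k) / 2 + real k * K \<le> (\<Sum>j\<in>Z. LL v u (y j)) + real (k - 1) * K"
      using hsum uU by fastforce
    moreover have "real (k - 1) * K = real k * K - K" using k by (simp add: of_nat_diff algebra_simps)
    ultimately have sZ: "real (N - k) / 2 \<le> (\<Sum>j\<in>Z. LL v u (y j))" using K by simp
    have LLi: "LL v u (y i) \<le> K" "0 < LL v u (y i)" using hyi uU LL_pos by auto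
    have "(\<Sum>j\<in>Z. Gx N v (sw i x j) y) = (\<Sum>j\<in>Z. Gx N v x y * LL v u (y j) / LL v u (y i))"
    proof (intro sum.cong refl)
      fix j assume "j \<in> Z"
      then have j: "j < N" "x j = 0" "i \<noteq> j" using x(2) by (auto simp: Z_def)
      show "Gx N v (sw i x j) y = Gx N v x y * LL v u (y j) / LL v u (y i)"
        using Gx_sw[of v i N j x y, OF v i j(1) j(3) j(2)] LLi(2) unfolding u_def by (simp add: field_simps)
    qed
    also have "\<dots> \<ge> (\<Sum>j\<in>Z. Gx N v x y * LL v u (y j) / K)"
    proof (intro sum_mono)
      fix j
      have "0 \<le> Gx N v x y * LL v u (y j)" using Gx_nonneg LL_pos[of v u "y j"] by simp
      then show "Gx N v x y * LL v u (y j) / K \<le> Gx N v x y * LL v u (y j) / LL v u (y i)"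
        using LLi by (intro divide_left_mono) auto
    qed
    also have "(\<Sum>j\<in>Z. Gx N v x y * LL v u (y j) / K) = Gx N v x y * (\<Sum>j\<in>Z. LL v u (y j)) / K"
      by (simp add: sum_distrib_left sum_divide_distrib)
    also have "\<dots> \<ge> Gx N v x y * (real (N - k) / 2) / K"
      using sZ Gx_nonneg[of N v x y] K by (intro divide_right_mono mult_left_mono) auto
    finally show ?thesis by (simp add: Z_def field_simps)
  qed
  have "SS U N k v i y * (real (N - k) / (2 * K)) = (\<Sum>x\<in>{x\<in>?X. x i \<noteq> 0}. Gx N v x y * (real (N - k) / (2 * K)))"
    unfolding SS_def by (rule sum_distrib_right)
  also have "\<dots> \<le> (\<Sum>x\<in>{x\<in>?X. x i \<noteq> 0}. \<Sum>j\<in>{j. j < N \<and> x j = 0}. Gx N v (sw i x j) y)"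
    by (intro sum_mono each) auto
  also have "\<dots> \<le> real k * TT U N k v i y"
    unfolding TT_def by (rule count_sw[OF U i, of "\<lambda>x. Gx N v x y"]) (simp add: Gx_nonneg)
  finally have "SS U N k v i y * (real (N - k) / (2 * K)) \<le> real k * TT U N k v i y" .
  then show ?thesis using n0 K by (simp add: field_simps)
qed

lemma quad:
  fixes w c :: "'a \<Rightarrow> real"
  assumes A: "finite A" and w: "\<And>a. a \<in> A \<Longrightarrow> 0 \<le> w a" and B: "\<And>a. a \<in> A \<Longrightarrow> \<bar>c a\<bar> \<le> B"
    and eta: "\<eta> \<ge> 0"
  defines "S \<equiv> (\<Sum>a\<in>{a\<in>A. c a \<noteq> 0}. w a)" and "T \<equiv> (\<Sum>a\<in>{a\<in>A. c a = 0}. w a)"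
  shows "(\<Sum>a\<in>A. w a * (c a)\<^sup>2) \<le> (\<Sum>a\<in>A. w a * (c a - t)\<^sup>2) + B\<^sup>2 * S * (\<eta> + (if S \<le> \<eta> * T then 0 else 1))"
proof -
  have S0: "S \<ge> 0" "T \<ge> 0" unfolding S_def T_def by (auto intro!: sum_nonneg w)
  have sumw: "(\<Sum>a\<in>A. w a) = S + T"
  proof -
    have "(\<Sum>a\<in>A. w a) = (\<Sum>a\<in>A \<inter> {a. c a \<noteq> 0}. w a) + (\<Sum>a\<in>A - {a. c a \<noteq> 0}. w a)"
      by (rule sum.Int_Diff[OF A])
    moreover have "A \<inter> {a. c a \<noteq> 0} = {a\<in>A. c a \<noteq> 0}" "A - {a. c a \<noteq> 0} = {a\<in>A. c a = 0}" by auto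
    ultimately show ?thesis unfolding S_def T_def by simp
  qed
  define C where "C = (\<Sum>a\<in>A. w a * c a)"
  have "\<bar>C\<bar> \<le> (\<Sum>a\<in>A. \<bar>w a * c a\<bar>)" unfolding C_def by (rule sum_abs)
  also have "\<dots> = (\<Sum>a\<in>{a\<in>A. c a \<noteq> 0}. \<bar>w a * c a\<bar>)"
    by (rule sum.mono_neutral_right) (use A in auto)
  also have "\<dots> \<le> (\<Sum>a\<in>{a\<in>A. c a \<noteq> 0}. w a * B)"
    by (intro sum_mono) (auto simp: abs_mult w B intro!: mult_left_mono)
  also have "\<dots> = B * S" unfolding S_def sum_distrib_right[symmetric] by (rule mult.commute)
  finally have Cb: "\<bar>C\<bar> \<le> B * S" .
  have expand: "(\<Sum>a\<in>A. w a * (c a - t)\<^sup>2) = (\<Sum>a\<in>A. w a * (c a)\<^sup>2) - 2 * t * C + t\<^sup>2 * (S + T)"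
  proof -
    have "(\<Sum>a\<in>A. w a * (c a - t)\<^sup>2) = (\<Sum>a\<in>A. w a * (c a)\<^sup>2 - 2 * t * (w a * c a) + t\<^sup>2 * w a)"
      by (intro sum.cong refl) (simp add: power2_eq_square algebra_simps)
    also have "\<dots> = (\<Sum>a\<in>A. w a * (c a)\<^sup>2) - 2 * t * C + t\<^sup>2 * (\<Sum>a\<in>A. w a)"
      unfolding C_def by (simp only: sum.distrib sum_subtractf sum_distrib_left)
    finally show ?thesis unfolding sumw .
  qed
  define s where "s = \<bar>t\<bar>"
  have s0: "s \<ge> 0" by (simp add: s_def)
  have tC: "2 * t * C \<le> 2 * s * (B * S)"
  proof -
    have "2 * t * C \<le> \<bar>2 * t * C\<bar>" by simp
    also have "\<dots> = 2 * s * \<bar>C\<bar>" by (simp add: s_def abs_mult)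
    also have "\<dots> \<le> 2 * s * (B * S)" using Cb s0 by (intro mult_left_mono) auto
    finally show ?thesis .
  qed
  have ts: "t\<^sup>2 = s\<^sup>2" by (simp add: s_def)
  have main: "2 * s * (B * S) \<le> s\<^sup>2 * (S + T) + B\<^sup>2 * S * (\<eta> + (if S \<le> \<eta> * T then 0 else 1))"
  proof (cases "S \<le> \<eta> * T")
    case False
    have "0 \<le> (s - B)\<^sup>2 * S" using S0 by simp
    then have "2 * s * (B * S) \<le> s\<^sup>2 * S + B\<^sup>2 * S" by (simp add: power2_eq_square algebra_simps)
    moreover have "s\<^sup>2 * S \<le> s\<^sup>2 * (S + T)" using S0 by (intro mult_left_mono) auto
    moreover have "B\<^sup>2 * S \<le> B\<^sup>2 * S * (\<eta> + 1)"
    proof -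
      have "0 \<le> B\<^sup>2 * S * \<eta>" using S0 eta by simp
      moreover have "B\<^sup>2 * S * (\<eta> + 1) = B\<^sup>2 * S * \<eta> + B\<^sup>2 * S" by (simp add: distrib_left)
      ultimately show ?thesis by linarith
    qed
    ultimately show ?thesis using False by simp
  next
    case True
    show ?thesis
    proof (cases "S = 0")
      case True then show ?thesis using S0 by simp
    next
      case False
      then have Sp: "S > 0" using S0 by simp
      have Tp: "T > 0"
      proof (rule ccontr)
        assume "\<not> T > 0"
        then have "T = 0" using S0 by simp
        then show False using True Sp by simp
      qed
      have "T * (s\<^sup>2 * T + B\<^sup>2 * S * \<eta> - 2 * s * (B * S)) = (s * T - B * S)\<^sup>2 + B\<^sup>2 * S * (\<eta> * T - S)"
        by (simp add: power2_eq_square) algebra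
      moreover have "0 \<le> B\<^sup>2 * S * (\<eta> * T - S)" using True S0 by simp
      ultimately have "0 \<le> T * (s\<^sup>2 * T + B\<^sup>2 * S * \<eta> - 2 * s * (B * S))" by simp
      then have "0 \<le> s\<^sup>2 * T + B\<^sup>2 * S * \<eta> - 2 * s * (B * S)" using Tp
        by (metis mult_pos_neg not_le)
      moreover have "s\<^sup>2 * T \<le> s\<^sup>2 * (S + T)" using S0 by (intro mult_left_mono) auto
      ultimately show ?thesis using True by simp
    qed
  qed
  have ts2: "t\<^sup>2 * (S + T) = s\<^sup>2 * (S + T)" using ts by simp
  show ?thesis using expand tC main ts2 by linarith
qed



lemma SS_meas[measurable]: "SS U N k v i \<in> borel_measurable (LB N)"
  unfolding SS_def by measurable
lemma TT_meas[measurable]: "TT U N k v i \<in> borel_measurable (LB N)"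
  unfolding TT_def by measurable

lemma LL_bound:
  assumes v: "v > 0" and d: "\<delta> \<ge> 0" and u: "\<bar>u\<bar> \<le> um" and t: "\<bar>t\<bar> \<le> um + \<delta>"
  shows "LL v u t \<le> exp ((um\<^sup>2 / 2 + um * \<delta>) / v)"
proof -
  define a where "a = \<bar>u\<bar>"
  have a0: "0 \<le> a" "a \<le> um" using u by (auto simp: a_def)
  have "u * t \<le> \<bar>u * t\<bar>" by simp
  also have "\<dots> = a * \<bar>t\<bar>" by (simp add: a_def abs_mult)
  also have "\<dots> \<le> a * (um + \<delta>)" using t a0 by (intro mult_left_mono) auto
  moreover have "u\<^sup>2 = a\<^sup>2" by (simp add: a_def)
  ultimately have ut: "u * t - u\<^sup>2 / 2 \<le> a * (um + \<delta>) - a\<^sup>2 / 2" by linarith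
  have "(um * (um + \<delta>) - um\<^sup>2 / 2) - (a * (um + \<delta>) - a\<^sup>2 / 2) = (um - a) * (um + \<delta> - (um + a) / 2)"
    by (simp add: power2_eq_square) algebra
  moreover have "0 \<le> (um - a) * (um + \<delta> - (um + a) / 2)" using a0 d by (intro mult_nonneg_nonneg) auto
  moreover have "um * (um + \<delta>) - um\<^sup>2 / 2 = um\<^sup>2 / 2 + um * \<delta>" by (simp add: power2_eq_square algebra_simps)
  ultimately have "a * (um + \<delta>) - a\<^sup>2 / 2 \<le> um\<^sup>2 / 2 + um * \<delta>" by linarith
  with ut have "(u * t - u\<^sup>2 / 2) / v \<le> (um\<^sup>2 / 2 + um * \<delta>) / v" using v by (intro divide_right_mono) auto
  then show ?thesis unfolding LL_def by simp
qed

lemma K_mono: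
  fixes u um \<delta> v :: real
  assumes v: "v > 0" and d: "\<delta> \<ge> 0" and u: "\<bar>u\<bar> \<le> um"
  shows "exp ((u\<^sup>2 / 2 + \<bar>u\<bar> * \<delta>) / v) \<le> exp ((um\<^sup>2 / 2 + um * \<delta>) / v)"
proof -
  have "\<bar>u\<bar>\<^sup>2 \<le> um\<^sup>2" using u by (intro power_mono) (auto intro: abs_ge_zero)
  then have "u\<^sup>2 \<le> um\<^sup>2" by simp
  moreover have "\<bar>u\<bar> * \<delta> \<le> um * \<delta>" using u d by (intro mult_right_mono) auto
  ultimately have "(u\<^sup>2 / 2 + \<bar>u\<bar> * \<delta>) \<le> (um\<^sup>2 / 2 + um * \<delta>)" by simp
  then have "(u\<^sup>2 / 2 + \<bar>u\<bar> * \<delta>) / v \<le> (um\<^sup>2 / 2 + um * \<delta>) / v" using v by (intro divide_right_mono) auto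
  then show ?thesis by simp
qed

lemma pow_exp_bound:
  fixes a :: real
  assumes "0 \<le> a" "a \<le> 1" shows "(1 - a) ^ n \<le> exp (- a * real n)"
proof -
  have e: "1 - a \<le> exp (- a)" using exp_ge_add_one_self[of "-a"] by simp
  have "(1 - a) ^ n \<le> exp (- a) ^ n"
    using assms e by (intro power_mono) auto
  also have "\<dots> = exp (- a * real n)" by (simp add: exp_of_nat_mult[symmetric] mult.commute)
  finally show ?thesis .
qed

lemma chern_final:
  fixes K :: real
  assumes K: "K \<ge> 1" and k: "k < N"
  shows "exp ((real (N - k) / 2 + real k * K) / (4 * K)) * (1 - 9/16 * (1 / (4 * K))) ^ (N - k)
    \<le> exp (real k / 4 - real (N - k) / (64 * K))"
proof -
  have a: "0 \<le> 9/16 * (1 / (4 * K))" "9/16 * (1 / (4 * K)) \<le> 1" using K by (auto simp: field_simps)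
  have "exp ((real (N - k) / 2 + real k * K) / (4 * K)) * (1 - 9/16 * (1 / (4 * K))) ^ (N - k)
      \<le> exp ((real (N - k) / 2 + real k * K) / (4 * K)) * exp (- (9/16 * (1 / (4 * K))) * real (N - k))"
    by (intro mult_left_mono pow_exp_bound a) simp
  also have "\<dots> = exp ((real (N - k) / 2 + real k * K) / (4 * K) + (- (9/16 * (1 / (4 * K))) * real (N - k)))"
    by (rule exp_add[symmetric])
  also have "(real (N - k) / 2 + real k * K) / (4 * K) + (- (9/16 * (1 / (4 * K))) * real (N - k)) = real k / 4 - real (N - k) / (64 * K)"
  proof -
    have K0: "K \<noteq> 0" using K by simp
    show ?thesis using K0 by (simp add: divide_simps)
  qed
  finally show ?thesis .
qed



lemma card_zeros:
  assumes x: "x \<in> sparse_set U N k"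
  shows "card {j. j < N \<and> x j = 0} = N - k"
proof -
  have "{..<N} = {j. j < N \<and> x j = 0} \<union> {j. j < N \<and> x j \<noteq> 0}" by auto
  moreover have "card ({j. j < N \<and> x j = 0} \<union> {j. j < N \<and> x j \<noteq> 0}) = card {j. j < N \<and> x j = 0} + card {j. j < N \<and> x j \<noteq> 0}"
    by (rule card_Un_disjoint) auto
  ultimately have "N = card {j. j < N \<and> x j = 0} + k" using sparse_D(2)[OF x] by (metis card_lessThan)
  then show ?thesis by simp
qed

lemma bad_prob:
  assumes U: "finite U" and Ub: "\<And>u. u \<in> U \<Longrightarrow> \<bar>u\<bar> \<le> um"
    and v: "v > 0" and d: "\<delta> > 0" and vd: "v / \<delta>\<^sup>2 \<le> 1/4" and i: "i < N" and k: "1 \<le> k" "k < N"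
    and Kdef: "K = exp ((um\<^sup>2 / 2 + um * \<delta>) / v)"
    and x: "x \<in> sparse_set U N k" "x i \<noteq> 0"
  shows "(\<integral>\<^sup>+y. ennreal (Gx N v x y) * indicator {y \<in> space (LB N). \<not> SS U N k v i y \<le> (2 * real k * K / real (N - k)) * TT U N k v i y} y \<partial>LB N)
     \<le> ennreal (v / \<delta>\<^sup>2 + real (card U) * exp (real k / 4 - real (N - k) / (64 * K)))"
proof -
  define \<eta> where "\<eta> = 2 * real k * K / real (N - k)"
  define bad where "bad = {y \<in> space (LB N). \<not> SS U N k v i y \<le> \<eta> * TT U N k v i y}"
  define Z where "Z = {j. j < N \<and> x j = 0}"
  define c where "c = real (N - k) / 2 + real k * K"
  have cZ: "card Z = N - k" unfolding Z_def by (rule card_zeros[OF x(1)])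
  have xiU: "x i \<in> U" using sparse_D(3)[OF x(1) i x(2)] .
  have um0: "0 \<le> um" using Ub[OF xiU] by (meson abs_ge_zero order_trans)
  have K1: "1 \<le> K" unfolding Kdef using um0 d v by simp
  have K0: "K > 0" using K1 by simp
  have bad_meas[measurable]: "bad \<in> sets (LB N)"
  proof -
    have "(\<lambda>y. \<eta> * TT U N k v i y) \<in> borel_measurable (LB N)"
      using TT_meas by (rule borel_measurable_times[OF borel_measurable_const])
    then have "{y \<in> space (LB N). SS U N k v i y \<le> \<eta> * TT U N k v i y} \<in> sets (LB N)"
      by (intro borel_measurable_le SS_meas)
    then have "space (LB N) - {y \<in> space (LB N). SS U N k v i y \<le> \<eta> * TT U N k v i y} \<in> sets (LB N)"
      by (rule sets.compl_sets)
    moreover have "bad = space (LB N) - {y \<in> space (LB N). SS U N k v i y \<le> \<eta> * TT U N k v i y}"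
      unfolding bad_def by blast
    ultimately show ?thesis by simp
  qed
  have "(\<integral>\<^sup>+y. ennreal (Gx N v x y) * indicator bad y \<partial>LB N) = (\<integral>\<^sup>+\<omega>. indicator bad (observe N x \<omega>) \<partial>noise_measure N v)"
    by (rule CV[OF v, symmetric]) measurable
  also have "\<dots> \<le> (\<integral>\<^sup>+\<omega>. indicator {\<omega>. \<delta> < \<bar>\<omega> i\<bar>} \<omega> + (\<Sum>u\<in>U. indicator {\<omega>. (\<Sum>j\<in>Z. min (LL v u (\<omega> j)) K) < c} \<omega>) \<partial>noise_measure N v)"
  proof (rule nn_integral_mono)
    fix \<omega> :: "nat \<Rightarrow> real"
    define y where "y = observe N x \<omega>"
    show "(indicator bad (observe N x \<omega>) :: ennreal) \<le> indicator {\<omega>. \<delta> < \<bar>\<omega> i\<bar>} \<omega> + (\<Sum>u\<in>U. indicator {\<omega>. (\<Sum>j\<in>Z. min (LL v u (\<omega> j)) K) < c} \<omega>)"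
    proof (cases "y \<in> bad")
      case False
      then show ?thesis by (simp add: y_def indicator_def zero_le)
    next
      case True
      then have nb: "\<not> SS U N k v i y \<le> \<eta> * TT U N k v i y" unfolding bad_def by blast
      have imp: "(\<forall>u\<in>U. LL v u (y i) \<le> K) \<Longrightarrow> (\<forall>u\<in>U. real (N - k) / 2 + real k * K \<le> (\<Sum>j\<in>{..<N} - {i}. min (LL v u (y j)) K))
         \<Longrightarrow> SS U N k v i y \<le> \<eta> * TT U N k v i y"
        unfolding \<eta>_def by (rule key[OF v U i K0 k])
      consider (a) "\<not> (\<forall>u\<in>U. LL v u (y i) \<le> K)"
        | (b) "\<not> (\<forall>u\<in>U. real (N - k) / 2 + real k * K \<le> (\<Sum>j\<in>{..<N} - {i}. min (LL v u (y j)) K))"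
        using imp nb by argo
      then show ?thesis
      proof cases
        case a
        then obtain u where u1: "u \<in> U" and u2: "\<not> LL v u (y i) \<le> K" by blast
        have u: "u \<in> U" "K < LL v u (y i)" using u1 u2 by auto
        have "\<delta> < \<bar>\<omega> i\<bar>"
        proof (rule ccontr)
          assume "\<not> \<delta> < \<bar>\<omega> i\<bar>"
          then have "\<bar>\<omega> i\<bar> \<le> \<delta>" by simp
          moreover have "y i = x i + \<omega> i" using i by (simp add: y_def observe_def)
          ultimately have "\<bar>y i\<bar> \<le> um + \<delta>" using Ub[OF xiU] by linarith
          then have "LL v u (y i) \<le> K" unfolding Kdef using LL_bound[OF v _ Ub[OF u(1)]] d by simp
          then show False using u by simp
        qed
        then have e1: "indicator {\<omega>. \<delta> < \<bar>\<omega> i\<bar>} \<omega> = (1::ennreal)" by simp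
        have "indicator bad (observe N x \<omega>) \<le> (1::ennreal)" by (simp add: indicator_def)
        also have "(1::ennreal) \<le> 1 + (\<Sum>u\<in>U. indicator {\<omega>. (\<Sum>j\<in>Z. min (LL v u (\<omega> j)) K) < c} \<omega>)"
          by (rule add_increasing2) auto
        finally show ?thesis unfolding e1 .
      next
        case b
        then obtain u where u1: "u \<in> U" and u2: "\<not> real (N - k) / 2 + real k * K \<le> (\<Sum>j\<in>{..<N} - {i}. min (LL v u (y j)) K)"
          by blast
        have u: "u \<in> U" "(\<Sum>j\<in>{..<N} - {i}. min (LL v u (y j)) K) < c" using u1 u2 unfolding c_def by auto
        have "(\<Sum>j\<in>Z. min (LL v u (\<omega> j)) K) = (\<Sum>j\<in>Z. min (LL v u (y j)) K)"
          by (intro sum.cong refl) (simp add: Z_def y_def observe_def)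
        also have "\<dots> \<le> (\<Sum>j\<in>{..<N} - {i}. min (LL v u (y j)) K)"
        proof (rule sum_mono2)
          show "finite ({..<N} - {i})" by simp
          show "Z \<subseteq> {..<N} - {i}" using x(2) by (auto simp: Z_def)
          fix j show "0 \<le> min (LL v u (y j)) K" using K0 LL_pos[of v u "y j"] by simp
        qed
        finally have "(\<Sum>j\<in>Z. min (LL v u (\<omega> j)) K) < c" using u(2) by simp
        then have "indicator {\<omega>. (\<Sum>j\<in>Z. min (LL v u (\<omega> j)) K) < c} \<omega> = (1::ennreal)" by simp
        then have "1 \<le> (\<Sum>u\<in>U. indicator {\<omega>. (\<Sum>j\<in>Z. min (LL v u (\<omega> j)) K) < c} \<omega> :: ennreal)"
          using member_le_sum[of u U "\<lambda>u. indicator {\<omega>. (\<Sum>j\<in>Z. min (LL v u (\<omega> j)) K) < c} \<omega> :: ennreal"] u(1) U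
          by simp
        moreover have "indicator bad (observe N x \<omega>) \<le> (1::ennreal)" by (simp add: indicator_def)
        ultimately have "indicator bad (observe N x \<omega>) \<le> (\<Sum>u\<in>U. indicator {\<omega>. (\<Sum>j\<in>Z. min (LL v u (\<omega> j)) K) < c} \<omega> :: ennreal)"
          by (rule order_trans[rotated])
        then show ?thesis by (rule add_increasing[OF zero_le])
      qed
    qed
  qed
  also have "\<dots> = (\<integral>\<^sup>+\<omega>. indicator {\<omega>. \<delta> < \<bar>\<omega> i\<bar>} \<omega> \<partial>noise_measure N v)
      + (\<Sum>u\<in>U. \<integral>\<^sup>+\<omega>. indicator {\<omega>. (\<Sum>j\<in>Z. min (LL v u (\<omega> j)) K) < c} \<omega> \<partial>noise_measure N v)"
  proof -
    have m1: "(\<lambda>\<omega>. indicator {\<omega>. \<delta> < \<bar>\<omega> i\<bar>} \<omega> :: ennreal) \<in> borel_measurable (noise_measure N v)"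
    proof -
      have iN: "i \<in> {..<N}" using i by simp
      show ?thesis unfolding noise_eq by (measurable, rule iN)
    qed
    have m2: "(\<lambda>\<omega>. indicator {\<omega>. (\<Sum>j\<in>Z. min (LL v u (\<omega> j)) K) < c} \<omega> :: ennreal) \<in> borel_measurable (noise_measure N v)" for u
    proof -
      have "\<And>j. j \<in> Z \<Longrightarrow> (\<lambda>\<omega>. \<omega> j) \<in> borel_measurable (noise_measure N v)"
        unfolding noise_eq by (auto simp: Z_def)
      then have "(\<lambda>\<omega>. \<Sum>j\<in>Z. min (LL v u (\<omega> j)) K) \<in> borel_measurable (noise_measure N v)"
        by (intro borel_measurable_sum borel_measurable_min measurable_compose[OF _ LL_meas]) auto
      then show ?thesis by measurable
    qed
    have ms: "(\<lambda>\<omega>. \<Sum>u\<in>U. indicator {\<omega>. (\<Sum>j\<in>Z. min (LL v u (\<omega> j)) K) < c} \<omega> :: ennreal) \<in> borel_measurable (noise_measure N v)"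
      by (rule borel_measurable_sum) (rule m2)
    have s: "(\<integral>\<^sup>+\<omega>. (\<Sum>u\<in>U. indicator {\<omega>. (\<Sum>j\<in>Z. min (LL v u (\<omega> j)) K) < c} \<omega>) \<partial>noise_measure N v)
      = (\<Sum>u\<in>U. \<integral>\<^sup>+\<omega>. indicator {\<omega>. (\<Sum>j\<in>Z. min (LL v u (\<omega> j)) K) < c} \<omega> \<partial>noise_measure N v)"
      by (rule nn_integral_sum) (rule m2)
    show ?thesis
      by (subst nn_integral_add[OF m1 ms]) (simp only: s)
  qed
  also have "\<dots> \<le> ennreal (v / \<delta>\<^sup>2) + (\<Sum>u\<in>U. ennreal (exp (real k / 4 - real (N - k) / (64 * K))))"
  proof (rule add_mono)
    show "(\<integral>\<^sup>+\<omega>. indicator {\<omega>. \<delta> < \<bar>\<omega> i\<bar>} \<omega> \<partial>noise_measure N v) \<le> ennreal (v / \<delta>\<^sup>2)"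
      by (rule tail_noise[OF v d i])
  next
    show "(\<Sum>u\<in>U. \<integral>\<^sup>+\<omega>. indicator {\<omega>. (\<Sum>j\<in>Z. min (LL v u (\<omega> j)) K) < c} \<omega> \<partial>noise_measure N v)
       \<le> (\<Sum>u\<in>U. ennreal (exp (real k / 4 - real (N - k) / (64 * K))))"
    proof (rule sum_mono)
    fix u assume u: "u \<in> U"
    have Ku: "exp ((u\<^sup>2 / 2 + \<bar>u\<bar> * \<delta>) / v) \<le> K" unfolding Kdef
      by (rule K_mono[OF v _ Ub[OF u]]) (use d in simp)
    have "(\<integral>\<^sup>+\<omega>. indicator {\<omega>. (\<Sum>j\<in>Z. min (LL v u (\<omega> j)) K) < c} \<omega> \<partial>noise_measure N v)
        \<le> ennreal (exp (c / (4 * K)) * (1 - 9/16 * (1 / (4 * K))) ^ card Z)"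
      by (rule chern_noise[OF v d Ku vd]) (unfold Z_def, blast)
    also have "\<dots> \<le> ennreal (exp (real k / 4 - real (N - k) / (64 * K)))"
      using chern_final[OF K1 k(2)] unfolding cZ c_def by (rule ennreal_leI)
    finally show "(\<integral>\<^sup>+\<omega>. indicator {\<omega>. (\<Sum>j\<in>Z. min (LL v u (\<omega> j)) K) < c} \<omega> \<partial>noise_measure N v)
        \<le> ennreal (exp (real k / 4 - real (N - k) / (64 * K)))" .
    qed
  qed
  also have "\<dots> = ennreal (v / \<delta>\<^sup>2 + real (card U) * exp (real k / 4 - real (N - k) / (64 * K)))"
  proof -
    have "(\<Sum>u\<in>U. ennreal (exp (real k / 4 - real (N - k) / (64 * K)))) = ennreal (\<Sum>u\<in>U. exp (real k / 4 - real (N - k) / (64 * K)))"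
      by (rule sum_ennreal) simp
    also have "(\<Sum>u\<in>U. exp (real k / 4 - real (N - k) / (64 * K))) = real (card U) * exp (real k / 4 - real (N - k) / (64 * K))"
      by simp
    moreover have "0 \<le> v / \<delta>\<^sup>2" using v by simp
    ultimately show ?thesis by (subst ennreal_plus) auto
  qed
  finally show ?thesis unfolding bad_def \<eta>_def .
qed



lemma bad_sets: "{y \<in> space (LB N). \<not> SS U N k v i y \<le> \<eta> * TT U N k v i y} \<in> sets (LB N)"
proof -
  have "(\<lambda>y. \<eta> * TT U N k v i y) \<in> borel_measurable (LB N)"
    using TT_meas by (rule borel_measurable_times[OF borel_measurable_const])
  then have "{y \<in> space (LB N). SS U N k v i y \<le> \<eta> * TT U N k v i y} \<in> sets (LB N)"
    by (intro borel_measurable_le SS_meas)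
  then have "space (LB N) - {y \<in> space (LB N). SS U N k v i y \<le> \<eta> * TT U N k v i y} \<in> sets (LB N)"
    by (rule sets.compl_sets)
  moreover have "{y \<in> space (LB N). \<not> SS U N k v i y \<le> \<eta> * TT U N k v i y} = space (LB N) - {y \<in> space (LB N). SS U N k v i y \<le> \<eta> * TT U N k v i y}"
    by blast
  ultimately show ?thesis by simp
qed

lemma double_count:
  assumes U: "finite U"
  shows "(\<Sum>i<N. real (card {x\<in>sparse_set U N k. x i \<noteq> 0})) = real k * real (card (sparse_set U N k))"
proof -
  let ?X = "sparse_set U N k"
  have finX: "finite ?X" by (rule finite_sparse[OF U])
  have "(\<Sum>i<N. real (card {x\<in>?X. x i \<noteq> 0})) = (\<Sum>i<N. \<Sum>x\<in>?X. if x i \<noteq> 0 then 1 else 0)"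
    by (intro sum.cong refl) (simp add: sum.If_cases finX Int_def conj_commute)
  also have "\<dots> = (\<Sum>x\<in>?X. \<Sum>i<N. if x i \<noteq> 0 then 1 else 0)" by (rule sum.swap)
  also have "\<dots> = (\<Sum>x\<in>?X. real (card {i. i < N \<and> x i \<noteq> 0}))"
  proof (intro sum.cong refl)
    fix x assume "x \<in> ?X"
    have "(\<Sum>i<N. if x i \<noteq> 0 then 1 else 0) = real (card ({..<N} \<inter> {i. x i \<noteq> 0}))"
      by (simp add: sum.If_cases)
    also have "{..<N} \<inter> {i. x i \<noteq> 0} = {i. i < N \<and> x i \<noteq> 0}" by auto
    finally show "(\<Sum>i<N. if x i \<noteq> 0 then 1 else 0) = real (card {i. i < N \<and> x i \<noteq> 0})" .
  qed
  also have "\<dots> = (\<Sum>x\<in>?X. real k)" by (intro sum.cong refl) (simp add: sparse_D(2))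
  finally show ?thesis by simp
qed

lemma int_Gx: "v > 0 \<Longrightarrow> (\<integral>\<^sup>+y. ennreal (Gx N v x y) \<partial>LB N) = 1"
proof -
  assume v: "v > 0"
  interpret prob_space "noise_measure N v" by (rule prob_noise[OF v])
  have "(\<integral>\<^sup>+y. ennreal (Gx N v x y) * 1 \<partial>LB N) = (\<integral>\<^sup>+\<omega>. 1 \<partial>noise_measure N v)"
    by (rule CV[OF v, symmetric]) simp
  also have "\<dots> = 1" by (simp add: emeasure_space_1)
  finally show ?thesis by simp
qed



lemma main_ineq:
  assumes U: "finite U" and Ub: "\<And>u. u \<in> U \<Longrightarrow> \<bar>u\<bar> \<le> um"
    and v: "v > 0" and d: "\<delta> > 0" and vd: "v / \<delta>\<^sup>2 \<le> 1/4" and k: "1 \<le> k" "k < N"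
    and Kdef: "K = exp ((um\<^sup>2 / 2 + um * \<delta>) / v)"
    and xm: "\<And>i. i < N \<Longrightarrow> (\<lambda>y. xh y i) \<in> borel_measurable (LB N)"
  defines "\<eta> \<equiv> 2 * real k * K / real (N - k)"
    and "\<epsilon> \<equiv> v / \<delta>\<^sup>2 + real (card U) * exp (real k / 4 - real (N - k) / (64 * K))"
  shows "ennreal (\<Sum>x\<in>sparse_set U N k. \<Sum>i<N. (x i)\<^sup>2)
    \<le> (\<Sum>x\<in>sparse_set U N k. \<integral>\<^sup>+\<omega>. ennreal (\<Sum>i<N. (x i - xh (observe N x \<omega>) i)\<^sup>2) \<partial>noise_measure N v)
      + ennreal (um\<^sup>2 * (\<eta> + \<epsilon>) * real k * real (card (sparse_set U N k)))"
proof (cases "sparse_set U N k = {}")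
  case True then show ?thesis by simp
next
  case False
  let ?X = "sparse_set U N k"
  have finX: "finite ?X" by (rule finite_sparse[OF U])
  obtain x0 where x0: "x0 \<in> ?X" using False by blast
  have "card {j. j < N \<and> x0 j \<noteq> 0} = k" using sparse_D(2)[OF x0] .
  then have "{j. j < N \<and> x0 j \<noteq> 0} \<noteq> {}" using k by (metis card.empty not_one_le_zero)
  then obtain j0 where j0: "j0 < N" "x0 j0 \<noteq> 0" by blast
  have um0: "0 \<le> um" using Ub[OF sparse_D(3)[OF x0 j0]] by (meson abs_ge_zero order_trans)
  have K0: "K > 0" unfolding Kdef by simp
  have eta0: "\<eta> \<ge> 0" unfolding \<eta>_def using K0 k by simp
  have eps0: "\<epsilon> \<ge> 0" unfolding \<epsilon>_def using v by simp
  define bad where "bad i = {y \<in> space (LB N). \<not> SS U N k v i y \<le> \<eta> * TT U N k v i y}" for i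
  have bad_m[measurable]: "bad i \<in> sets (LB N)" for i unfolding bad_def by (rule bad_sets)
  define h where "h x y = (\<Sum>i<N. (x i - xh y i)\<^sup>2)" for x :: "nat \<Rightarrow> real" and y
  have hm[measurable]: "(\<lambda>y. h x y) \<in> borel_measurable (LB N)" for x
    unfolding h_def by (intro borel_measurable_sum borel_measurable_power borel_measurable_diff borel_measurable_const xm) auto
  define fA where "fA y = (\<Sum>x\<in>?X. ennreal (Gx N v x y) * ennreal (h x y))" for y
  define fB where "fB y = (\<Sum>i<N. \<Sum>x\<in>{x\<in>?X. x i \<noteq> 0}. ennreal (um\<^sup>2 * \<eta> * Gx N v x y) + ennreal (um\<^sup>2 * Gx N v x y) * indicator (bad i) y)" for y
  define fC where "fC y = (\<Sum>x\<in>?X. ennreal (Gx N v x y * (\<Sum>i<N. (x i)\<^sup>2)))" for y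
  have fA_m: "fA \<in> borel_measurable (LB N)" unfolding fA_def by measurable
  have fB_m: "fB \<in> borel_measurable (LB N)" unfolding fB_def by measurable
  have eqA: "(\<Sum>x\<in>?X. \<integral>\<^sup>+\<omega>. ennreal (\<Sum>i<N. (x i - xh (observe N x \<omega>) i)\<^sup>2) \<partial>noise_measure N v) = (\<integral>\<^sup>+y. fA y \<partial>LB N)"
  proof -
    have "(\<Sum>x\<in>?X. \<integral>\<^sup>+\<omega>. ennreal (\<Sum>i<N. (x i - xh (observe N x \<omega>) i)\<^sup>2) \<partial>noise_measure N v)
        = (\<Sum>x\<in>?X. \<integral>\<^sup>+y. ennreal (Gx N v x y) * ennreal (h x y) \<partial>LB N)"
    proof (intro sum.cong refl)
      fix x
      show "(\<integral>\<^sup>+\<omega>. ennreal (\<Sum>i<N. (x i - xh (observe N x \<omega>) i)\<^sup>2) \<partial>noise_measure N v) = (\<integral>\<^sup>+y. ennreal (Gx N v x y) * ennreal (h x y) \<partial>LB N)"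
      proof -
        have "(\<lambda>y. ennreal (h x y)) \<in> borel_measurable (LB N)" using hm[of x] by measurable
        from CV[OF v this, of x] show ?thesis unfolding h_def by simp
      qed
    qed
    also have "\<dots> = (\<integral>\<^sup>+y. fA y \<partial>LB N)"
      unfolding fA_def by (rule nn_integral_sum[symmetric]) measurable
    finally show ?thesis .
  qed
  have eqC: "(\<integral>\<^sup>+y. fC y \<partial>LB N) = ennreal (\<Sum>x\<in>?X. \<Sum>i<N. (x i)\<^sup>2)"
  proof -
    have "(\<integral>\<^sup>+y. fC y \<partial>LB N) = (\<Sum>x\<in>?X. \<integral>\<^sup>+y. ennreal (Gx N v x y * (\<Sum>i<N. (x i)\<^sup>2)) \<partial>LB N)"
      unfolding fC_def by (rule nn_integral_sum) measurable
    also have "\<dots> = (\<Sum>x\<in>?X. ennreal (\<Sum>i<N. (x i)\<^sup>2))"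
    proof (intro sum.cong refl)
      fix x
      have "(\<integral>\<^sup>+y. ennreal (Gx N v x y * (\<Sum>i<N. (x i)\<^sup>2)) \<partial>LB N) = (\<integral>\<^sup>+y. ennreal (Gx N v x y) * ennreal (\<Sum>i<N. (x i)\<^sup>2) \<partial>LB N)"
        by (intro nn_integral_cong) (simp add: ennreal_mult Gx_nonneg sum_nonneg)
      also have "\<dots> = (\<integral>\<^sup>+y. ennreal (Gx N v x y) \<partial>LB N) * ennreal (\<Sum>i<N. (x i)\<^sup>2)"
        by (rule nn_integral_multc) measurable
      also have "\<dots> = ennreal (\<Sum>i<N. (x i)\<^sup>2)" by (simp add: int_Gx[OF v])
      finally show "(\<integral>\<^sup>+y. ennreal (Gx N v x y * (\<Sum>i<N. (x i)\<^sup>2)) \<partial>LB N) = ennreal (\<Sum>i<N. (x i)\<^sup>2)" .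
    qed
    also have "\<dots> = ennreal (\<Sum>x\<in>?X. \<Sum>i<N. (x i)\<^sup>2)"
      by (rule sum_ennreal) (simp add: sum_nonneg)
    finally show ?thesis .
  qed
  have boundB: "(\<integral>\<^sup>+y. fB y \<partial>LB N) \<le> ennreal (um\<^sup>2 * (\<eta> + \<epsilon>) * real k * real (card ?X))"
  proof -
    have "(\<integral>\<^sup>+y. fB y \<partial>LB N) = (\<Sum>i<N. \<Sum>x\<in>{x\<in>?X. x i \<noteq> 0}.
        (\<integral>\<^sup>+y. ennreal (um\<^sup>2 * \<eta> * Gx N v x y) \<partial>LB N) + (\<integral>\<^sup>+y. ennreal (um\<^sup>2 * Gx N v x y) * indicator (bad i) y \<partial>LB N))"
      unfolding fB_def
      by (subst nn_integral_sum, measurable, intro sum.cong refl, subst nn_integral_sum, measurable,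
          intro sum.cong refl, rule nn_integral_add) measurable
    also have "\<dots> \<le> (\<Sum>i<N. \<Sum>x\<in>{x\<in>?X. x i \<noteq> 0}. ennreal (um\<^sup>2 * (\<eta> + \<epsilon>)))"
    proof (intro sum_mono)
      fix i x assume i: "i \<in> {..<N}" and x: "x \<in> {x\<in>?X. x i \<noteq> 0}"
      have "(\<integral>\<^sup>+y. ennreal (um\<^sup>2 * \<eta> * Gx N v x y) \<partial>LB N) = (\<integral>\<^sup>+y. ennreal (um\<^sup>2 * \<eta>) * ennreal (Gx N v x y) \<partial>LB N)"
        by (intro nn_integral_cong) (simp add: ennreal_mult Gx_nonneg eta0)
      also have "\<dots> = ennreal (um\<^sup>2 * \<eta>) * (\<integral>\<^sup>+y. ennreal (Gx N v x y) \<partial>LB N)"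
        by (rule nn_integral_cmult) measurable
      also have "\<dots> = ennreal (um\<^sup>2 * \<eta>)" by (simp add: int_Gx[OF v])
      finally have e1: "(\<integral>\<^sup>+y. ennreal (um\<^sup>2 * \<eta> * Gx N v x y) \<partial>LB N) = ennreal (um\<^sup>2 * \<eta>)" .
      have "(\<integral>\<^sup>+y. ennreal (um\<^sup>2 * Gx N v x y) * indicator (bad i) y \<partial>LB N)
          = (\<integral>\<^sup>+y. ennreal (um\<^sup>2) * (ennreal (Gx N v x y) * indicator (bad i) y) \<partial>LB N)"
        by (intro nn_integral_cong) (simp add: ennreal_mult Gx_nonneg mult.assoc)
      also have "\<dots> = ennreal (um\<^sup>2) * (\<integral>\<^sup>+y. ennreal (Gx N v x y) * indicator (bad i) y \<partial>LB N)"
        by (rule nn_integral_cmult) measurable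
      also have "\<dots> \<le> ennreal (um\<^sup>2) * ennreal \<epsilon>"
      proof (intro mult_left_mono)
        show "(\<integral>\<^sup>+y. ennreal (Gx N v x y) * indicator (bad i) y \<partial>LB N) \<le> ennreal \<epsilon>"
          unfolding bad_def \<epsilon>_def \<eta>_def
          by (rule bad_prob[OF U Ub v d vd _ k Kdef]) (use i x in auto)
      qed simp
      finally have e2: "(\<integral>\<^sup>+y. ennreal (um\<^sup>2 * Gx N v x y) * indicator (bad i) y \<partial>LB N) \<le> ennreal (um\<^sup>2) * ennreal \<epsilon>" .
      have "ennreal (um\<^sup>2 * \<eta>) + ennreal (um\<^sup>2) * ennreal \<epsilon> = ennreal (um\<^sup>2 * (\<eta> + \<epsilon>))"
        using eta0 eps0 by (simp add: ennreal_mult[symmetric] ennreal_plus[symmetric] distrib_left del: ennreal_plus)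
      then show "(\<integral>\<^sup>+y. ennreal (um\<^sup>2 * \<eta> * Gx N v x y) \<partial>LB N) + (\<integral>\<^sup>+y. ennreal (um\<^sup>2 * Gx N v x y) * indicator (bad i) y \<partial>LB N)
          \<le> ennreal (um\<^sup>2 * (\<eta> + \<epsilon>))"
        using e1 e2 by (metis add_left_mono)
    qed
    also have "\<dots> = ennreal (um\<^sup>2 * (\<eta> + \<epsilon>) * (\<Sum>i<N. real (card {x\<in>?X. x i \<noteq> 0})))"
    proof -
      have "(\<Sum>i<N. \<Sum>x\<in>{x\<in>?X. x i \<noteq> 0}. ennreal (um\<^sup>2 * (\<eta> + \<epsilon>))) = (\<Sum>i<N. ennreal (um\<^sup>2 * (\<eta> + \<epsilon>) * real (card {x\<in>?X. x i \<noteq> 0})))"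
      proof (intro sum.cong refl)
        fix i
        have "(\<Sum>x\<in>{x\<in>?X. x i \<noteq> 0}. ennreal (um\<^sup>2 * (\<eta> + \<epsilon>))) = ennreal (\<Sum>x\<in>{x\<in>?X. x i \<noteq> 0}. um\<^sup>2 * (\<eta> + \<epsilon>))"
          by (rule sum_ennreal) (use eta0 eps0 in simp)
        then show "(\<Sum>x\<in>{x\<in>?X. x i \<noteq> 0}. ennreal (um\<^sup>2 * (\<eta> + \<epsilon>))) = ennreal (um\<^sup>2 * (\<eta> + \<epsilon>) * real (card {x\<in>?X. x i \<noteq> 0}))"
          by (simp add: mult.commute)
      qed
      also have "\<dots> = ennreal (\<Sum>i<N. um\<^sup>2 * (\<eta> + \<epsilon>) * real (card {x\<in>?X. x i \<noteq> 0}))"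
        by (rule sum_ennreal) (use eta0 eps0 in simp)
      finally show ?thesis by (simp add: sum_distrib_left)
    qed
    also have "\<dots> = ennreal (um\<^sup>2 * (\<eta> + \<epsilon>) * real k * real (card ?X))"
      by (simp add: double_count[OF U] mult.assoc)
    finally show ?thesis .
  qed
  have pw: "fC y \<le> fA y + fB y" if y: "y \<in> space (LB N)" for y
  proof -
    define ind where "ind i = (if SS U N k v i y \<le> \<eta> * TT U N k v i y then 0 else 1 :: real)" for i
    have indb: "(indicator (bad i) y :: ennreal) = ennreal (ind i)" for i using y by (simp add: bad_def ind_def indicator_def)
    have q: "(\<Sum>x\<in>?X. Gx N v x y * (x i)\<^sup>2) \<le> (\<Sum>x\<in>?X. Gx N v x y * (x i - xh y i)\<^sup>2) + um\<^sup>2 * SS U N k v i y * (\<eta> + ind i)"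
      if i: "i < N" for i
    proof -
      have B: "\<bar>x i\<bar> \<le> um" if "x \<in> ?X" for x
        using sparse_D(3)[OF that i] Ub um0 by (cases "x i = 0") auto
      show ?thesis
        using quad[OF finX, of "\<lambda>x. Gx N v x y" "\<lambda>x. x i" um \<eta> "xh y i"] B eta0 Gx_nonneg
        unfolding SS_def TT_def ind_def by auto
    qed
    have "(\<Sum>x\<in>?X. Gx N v x y * (\<Sum>i<N. (x i)\<^sup>2)) = (\<Sum>i<N. \<Sum>x\<in>?X. Gx N v x y * (x i)\<^sup>2)"
      by (simp add: sum_distrib_left sum.swap[of _ "{..<N}"])
    also have "\<dots> \<le> (\<Sum>i<N. (\<Sum>x\<in>?X. Gx N v x y * (x i - xh y i)\<^sup>2) + um\<^sup>2 * SS U N k v i y * (\<eta> + ind i))"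
      by (intro sum_mono q) auto
    also have "\<dots> = (\<Sum>x\<in>?X. Gx N v x y * h x y) + (\<Sum>i<N. \<Sum>x\<in>{x\<in>?X. x i \<noteq> 0}. um\<^sup>2 * \<eta> * Gx N v x y + um\<^sup>2 * Gx N v x y * ind i)"
      unfolding h_def SS_def
      by (simp add: sum.distrib sum_distrib_left sum_distrib_right sum.swap[of _ "{..<N}"] algebra_simps)
    finally have real_ineq: "(\<Sum>x\<in>?X. Gx N v x y * (\<Sum>i<N. (x i)\<^sup>2))
        \<le> (\<Sum>x\<in>?X. Gx N v x y * h x y) + (\<Sum>i<N. \<Sum>x\<in>{x\<in>?X. x i \<noteq> 0}. um\<^sup>2 * \<eta> * Gx N v x y + um\<^sup>2 * Gx N v x y * ind i)" .
    have hnn: "0 \<le> h x y" for x unfolding h_def by (simp add: sum_nonneg)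
    have ind01: "0 \<le> ind i" for i by (simp add: ind_def)
    have cC: "fC y = ennreal (\<Sum>x\<in>?X. Gx N v x y * (\<Sum>i<N. (x i)\<^sup>2))"
      unfolding fC_def by (rule sum_ennreal) (simp add: Gx_nonneg sum_nonneg)
    have cA: "fA y = ennreal (\<Sum>x\<in>?X. Gx N v x y * h x y)"
    proof -
      have "fA y = (\<Sum>x\<in>?X. ennreal (Gx N v x y * h x y))"
        unfolding fA_def by (intro sum.cong refl) (simp add: ennreal_mult Gx_nonneg hnn)
      also have "\<dots> = ennreal (\<Sum>x\<in>?X. Gx N v x y * h x y)"
        by (rule sum_ennreal) (simp add: Gx_nonneg hnn)
      finally show ?thesis .
    qed
    have cB: "fB y = ennreal (\<Sum>i<N. \<Sum>x\<in>{x\<in>?X. x i \<noteq> 0}. um\<^sup>2 * \<eta> * Gx N v x y + um\<^sup>2 * Gx N v x y * ind i)"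
    proof -
      have "fB y = (\<Sum>i<N. \<Sum>x\<in>{x\<in>?X. x i \<noteq> 0}. ennreal (um\<^sup>2 * \<eta> * Gx N v x y + um\<^sup>2 * Gx N v x y * ind i))"
        unfolding fB_def
      proof (intro sum.cong refl)
        fix i x
        have "ennreal (um\<^sup>2 * Gx N v x y) * indicator (bad i) y = ennreal (um\<^sup>2 * Gx N v x y * ind i)"
          unfolding indb by (simp add: ennreal_mult[symmetric] Gx_nonneg ind_def del: ennreal_mult)
        then show "ennreal (um\<^sup>2 * \<eta> * Gx N v x y) + ennreal (um\<^sup>2 * Gx N v x y) * indicator (bad i) y
            = ennreal (um\<^sup>2 * \<eta> * Gx N v x y + um\<^sup>2 * Gx N v x y * ind i)"
          by (simp add: ennreal_plus Gx_nonneg eta0 ind01)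
      qed
      also have "\<dots> = ennreal (\<Sum>i<N. \<Sum>x\<in>{x\<in>?X. x i \<noteq> 0}. um\<^sup>2 * \<eta> * Gx N v x y + um\<^sup>2 * Gx N v x y * ind i)"
        by (subst sum_ennreal, simp add: Gx_nonneg eta0 ind01 sum_nonneg, subst sum_ennreal)
           (auto simp: Gx_nonneg eta0 ind01 sum_nonneg)
      finally show ?thesis .
    qed
    have "0 \<le> (\<Sum>x\<in>?X. Gx N v x y * h x y)" by (simp add: Gx_nonneg hnn sum_nonneg)
    moreover have "0 \<le> (\<Sum>i<N. \<Sum>x\<in>{x\<in>?X. x i \<noteq> 0}. um\<^sup>2 * \<eta> * Gx N v x y + um\<^sup>2 * Gx N v x y * ind i)"
      by (simp add: Gx_nonneg eta0 ind01 sum_nonneg)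
    ultimately show ?thesis unfolding cA cB cC using real_ineq
      by (simp add: ennreal_plus[symmetric] ennreal_leI del: ennreal_plus)
  qed
  have "ennreal (\<Sum>x\<in>?X. \<Sum>i<N. (x i)\<^sup>2) = (\<integral>\<^sup>+y. fC y \<partial>LB N)" using eqC by simp
  also have "\<dots> \<le> (\<integral>\<^sup>+y. fA y + fB y \<partial>LB N)" by (intro nn_integral_mono pw)
  also have "\<dots> = (\<integral>\<^sup>+y. fA y \<partial>LB N) + (\<integral>\<^sup>+y. fB y \<partial>LB N)"
    by (rule nn_integral_add[OF fA_m fB_m])
  also have "\<dots> \<le> (\<integral>\<^sup>+y. fA y \<partial>LB N) + ennreal (um\<^sup>2 * (\<eta> + \<epsilon>) * real k * real (card ?X))"
    by (intro add_left_mono boundB)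
  finally show ?thesis unfolding eqA .
qed



lemma excess_bound:
  assumes U: "finite U" and Ub: "\<And>u. u \<in> U \<Longrightarrow> \<bar>u\<bar> \<le> um"
    and v: "v > 0" and d: "\<delta> > 0" and vd: "v / \<delta>\<^sup>2 \<le> 1/4" and k: "1 \<le> k" "k < N"
    and Kdef: "K = exp ((um\<^sup>2 / 2 + um * \<delta>) / v)"
    and xm: "\<And>i. i < N \<Longrightarrow> (\<lambda>y. xh y i) \<in> borel_measurable (LB N)"
    and vdef: "v = s2 / ln (real N / real k)"
    and c_def: "c = um\<^sup>2 * (2 * real k * K / real (N - k) + (v / \<delta>\<^sup>2 + real (card U) * exp (real k / 4 - real (N - k) / (64 * K))))"
  shows "ereal (- c) \<le> excess U s2 N k xh"
proof -
  let ?X = "sparse_set U N k"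
  define m where "m = card ?X"
  define E where "E = (\<Sum>x\<in>?X. \<Sum>i<N. (x i)\<^sup>2)"
  define SI where "SI = (\<Sum>x\<in>?X. \<integral>\<^sup>+\<omega>. ennreal (\<Sum>i<N. (x i - xh (observe N x \<omega>) i)\<^sup>2) \<partial>noise_measure N v)"
  have K0: "K > 0" unfolding Kdef by simp
  have c0: "c \<ge> 0" unfolding c_def using K0 k v by (intro mult_nonneg_nonneg add_nonneg_nonneg) auto
  have kpos: "real k > 0" using k by simp
  have ineq: "ennreal E \<le> SI + ennreal (c * real k * real m)"
    using main_ineq[OF U Ub v d vd k Kdef xm] unfolding E_def SI_def m_def c_def by simp
  have mse_eq: "mse U N k v xh = SI / of_nat m" unfolding mse_def SI_def m_def ..
  have se_eq: "signal_energy U N k = E / real m" unfolding signal_energy_def E_def m_def ..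
  have exc: "excess U s2 N k xh = (enn2ereal (SI / of_nat m) - ereal (E / real m)) / ereal (real k)"
    unfolding excess_def vdef[symmetric] mse_eq se_eq ..
  show ?thesis
  proof (cases "m = 0")
    case True
    then have "?X = {}" using finite_sparse[OF U] unfolding m_def by simp
    then have "SI = 0" unfolding SI_def by simp
    then have "excess U s2 N k xh = 0" unfolding exc using True by (simp add: zero_ennreal.rep_eq)
    then show ?thesis using c0 by (simp add: zero_ereal_def)
  next
    case False
    then have mpos: "real m > 0" by simp
    show ?thesis
    proof (cases "SI = top")
      case True
      then have "SI / of_nat m = top" using False by (simp add: ennreal_top_divide)
      then have "excess U s2 N k xh = \<infinity>" unfolding exc using kpos by simp
      then show ?thesis by simp
    next
      case False
      then obtain r where r: "SI = ennreal r" "0 \<le> r" by (cases SI) auto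
      have "ennreal E \<le> ennreal (r + c * real k * real m)"
        using ineq r c0 mpos kpos by (simp add: ennreal_plus)
      then have Er: "E \<le> r + c * real k * real m"
        using r c0 mpos kpos by (subst (asm) ennreal_le_iff) auto
      have "SI / of_nat m = ennreal (r / real m)"
        using r mpos by (simp add: ennreal_of_nat_eq_real_of_nat divide_ennreal)
      then have "excess U s2 N k xh = ereal ((r / real m - E / real m) / real k)"
        unfolding exc using r mpos kpos by (simp add: enn2ereal_ennreal)
      moreover have "- c \<le> (r / real m - E / real m) / real k"
      proof -
        have "- c * real k * real m \<le> r - E" using Er by simp
        then have "- c * real k \<le> (r - E) / real m" using mpos by (simp add: field_simps)
        then have "- c * real k \<le> (r - E) / real m" by simp
        then have "- c \<le> (r - E) / real m / real k" using pos_le_divide_eq[OF kpos] by blast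
        then show ?thesis by (simp add: diff_divide_distrib)
      qed
      ultimately show ?thesis by simp
    qed
  qed
qed



lemma per_N_real:
  fixes N k :: nat and \<theta> :: real
  assumes k: "1 \<le> k" "k < N"
  defines "L \<equiv> ln (real N / real k)" and "r \<equiv> real k / real N"
  defines "K \<equiv> exp (\<theta> * L)" and "w \<equiv> exp (- ((1 - \<theta>) * L))"
  shows "2 * real k * K / real (N - k) = 2 * w / (1 - r)"
    and "w \<le> (1 - r) / 16 \<Longrightarrow> exp (real k / 4 - real (N - k) / (64 * K)) \<le> 64 * exp (1/4) * w / (1 - r)"
proof -
  have kp: "real k > 0" "real N > 0" "real k < real N" using k by auto
  have r_eq: "r = exp (- L)"
  proof -
    have "exp (- L) = inverse (exp (ln (real N / real k)))" unfolding L_def by (simp add: exp_minus)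
    also have "\<dots> = inverse (real N / real k)" using kp by simp
    also have "\<dots> = r" unfolding r_def by simp
    finally show ?thesis by simp
  qed
  have r01: "0 < r" "r < 1" unfolding r_def using kp by auto
  have Kp: "K > 0" unfolding K_def by simp
  have rK: "r * K = w" unfolding r_eq K_def w_def by (simp add: exp_add[symmetric] algebra_simps)
  have Nk: "real (N - k) = real N * (1 - r)" unfolding r_def using kp k by (simp add: of_nat_diff field_simps)
  have kr: "real k = real N * r" unfolding r_def using kp by simp
  show "2 * real k * K / real (N - k) = 2 * w / (1 - r)"
    unfolding Nk kr rK[symmetric] using kp r01 by (simp add: field_simps)
  assume wle: "w \<le> (1 - r) / 16"
  have wp: "w > 0" unfolding w_def by simp
  define X where "X = (1 - r) / (64 * w)"
  have Xp: "X > 0" unfolding X_def using wp r01 by simp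
  have X4: "1/4 \<le> X" unfolding X_def using wp wle r01 by (simp add: field_simps)
  have e1: "real (N - k) / (64 * K) = real k * X"
    unfolding X_def Nk kr rK[symmetric] using kp r01 Kp by (simp add: field_simps)
  have "real k / 4 - real (N - k) / (64 * K) = real k * (1/4 - X)" unfolding e1 by (simp add: algebra_simps)
  also have "\<dots> \<le> 1 * (1/4 - X)"
    using k X4 by (intro mult_right_mono_neg) auto
  finally have le1: "real k / 4 - real (N - k) / (64 * K) \<le> 1/4 - X" by simp
  have "exp (real k / 4 - real (N - k) / (64 * K)) \<le> exp (1/4 - X)" using le1 by simp
  also have "\<dots> = exp (1/4) / exp X" by (simp add: exp_diff)
  also have "\<dots> \<le> exp (1/4) / X"
  proof -
    have "1 + X \<le> exp X" by (rule exp_ge_add_one_self)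
    then have "X \<le> exp X" by linarith
    then show ?thesis using Xp by (intro divide_left_mono) auto
  qed
  also have "\<dots> = 64 * exp (1/4) * w / (1 - r)" unfolding X_def using wp r01 by (simp add: field_simps)
  finally show "exp (real k / 4 - real (N - k) / (64 * K)) \<le> 64 * exp (1/4) * w / (1 - r)" .
qed



lemma exp_neg_tendsto:
  fixes c :: real and L :: "'a \<Rightarrow> real"
  assumes c: "c > 0" and L: "filterlim L at_top F"
  shows "((\<lambda>x. exp (- (c * L x))) \<longlongrightarrow> 0) F"
proof -
  have "filterlim (\<lambda>x. c * L x) at_top F"
    by (rule filterlim_tendsto_pos_mult_at_top[of "\<lambda>_. c" c F L]) (auto simp: c L)
  then have "filterlim (\<lambda>x. - (c * L x)) at_bot F"
    by (simp add: filterlim_uminus_at_bot)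
  then show ?thesis by (rule filterlim_compose[OF exp_at_bot])
qed

theorem theorem2:
  fixes U :: "real set" and s2 :: real and \<gamma> :: real
    and k :: "nat \<Rightarrow> nat"
    and xh :: "nat \<Rightarrow> (nat \<Rightarrow> real) \<Rightarrow> (nat \<Rightarrow> real)"
  defines "umin \<equiv> Min (abs ` U)" and "umax \<equiv> Max (abs ` U)"
  defines "C0 \<equiv> s2 / umax\<^sup>2 * (1 - umax\<^sup>2 / (2 * s2))"
  defines "C1 \<equiv> s2 / (2 * umax\<^sup>2) * (1 - umax\<^sup>2 / (2 * s2))\<^sup>2 + (umax - umin / 2)\<^sup>2 / (2 * s2)"
  assumes U_fin: "finite U" and U_ne: "U \<noteq> {}" and U_nz: "0 \<notin> U"
    and s2_pos: "s2 > 0"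
    and s2_big: "s2 > umax\<^sup>2 / 2"
    and k_ge1: "\<forall>N. 1 \<le> k N"
    and k_lt: "\<forall>\<^sub>F N in sequentially. k N < N"
    and k_inf: "filterlim k at_top sequentially"
    and ratio: "(\<lambda>N. ln (real (k N)) / ln (real N)) \<longlonglongrightarrow> \<gamma>"
    and \<gamma>_lt: "\<gamma> < min (C0 / (C0 + s2 / (umax * umin))) (min (C1 / (C1 + 3)) (1/2))"
    and xh_meas: "\<forall>N. \<forall>i<N. (\<lambda>y. xh N y i) \<in> borel_measurable (PiM {..<N} (\<lambda>_. lborel))"
  shows "liminf (\<lambda>N. excess U s2 N (k N) (xh N)) \<ge> 0"
proof -
  have Ub: "\<bar>u\<bar> \<le> umax" if "u \<in> U" for u
    unfolding umax_def using U_fin that by (intro Max_ge) auto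
  obtain u0 where u0: "u0 \<in> U" using U_ne by blast
  have umax_pos: "umax > 0"
  proof -
    have "u0 \<noteq> 0" using u0 U_nz by auto
    then have "0 < \<bar>u0\<bar>" by simp
    then show ?thesis using Ub[OF u0] by linarith
  qed
  have g12: "\<gamma> < 1/2" using \<gamma>_lt by simp
  define \<delta> where "\<delta> = (s2 - umax\<^sup>2 / 2) / (2 * umax)"
  have d: "\<delta> > 0" unfolding \<delta>_def using s2_big umax_pos by simp
  define \<theta> where "\<theta> = (umax\<^sup>2 / 2 + umax * \<delta>) / s2"
  have ud: "umax * \<delta> = (s2 - umax\<^sup>2 / 2) / 2" unfolding \<delta>_def using umax_pos by (simp add: field_simps)
  have th0: "0 < \<theta>" unfolding \<theta>_def using s2_pos umax_pos d by (simp add: add_pos_pos)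
  have th1: "\<theta> < 1" unfolding \<theta>_def using s2_pos s2_big ud by (simp add: field_simps)
  define L where "L N = ln (real N / real (k N))" for N
  define v where "v N = s2 / L N" for N
  define r where "r N = real (k N) / real N" for N
  define w where "w N = exp (- ((1 - \<theta>) * L N))" for N
  define B where "B N = umax\<^sup>2 * (2 * w N / (1 - r N) + (v N / \<delta>\<^sup>2 + real (card U) * (64 * exp (1/4) * w N / (1 - r N))))" for N
  have ev_ratio: "\<forall>\<^sub>F N in sequentially. ln (real (k N)) / ln (real N) < 1/2"
    using order_tendstoD(2)[OF ratio g12] .
  have ev_L: "\<forall>\<^sub>F N in sequentially. ln (real N) / 2 \<le> L N"
    using ev_ratio eventually_ge_at_top[of 2]
  proof eventually_elim
    case (elim N)
    have Np: "ln (real N) > 0" using elim(2) by simp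
    have kp: "real (k N) > 0" using k_ge1 by (simp add: Suc_le_eq)
    have "ln (real (k N)) < ln (real N) / 2" using elim(1) Np by (simp add: field_simps)
    moreover have "L N = ln (real N) - ln (real (k N))" unfolding L_def using kp elim(2) by (simp add: ln_div)
    ultimately show ?case by simp
  qed
  have lnN: "filterlim (\<lambda>N. 1/2 * ln (real N)) at_top sequentially"
    by (rule filterlim_tendsto_pos_mult_at_top[OF tendsto_const])
       (auto intro: filterlim_compose[OF ln_at_top filterlim_real_sequentially])
  have Lt: "filterlim L at_top sequentially"
    by (rule filterlim_at_top_mono[OF lnN]) (use ev_L in simp)
  have r_eq: "\<forall>\<^sub>F N in sequentially. r N = exp (- (1 * L N))"
    using eventually_ge_at_top[of 1]
  proof eventually_elim
    case (elim N)
    have kp: "real (k N) > 0" using k_ge1 by (simp add: Suc_le_eq)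
    have Np: "real N > 0" using elim by simp
    have "exp (- (1 * L N)) = inverse (exp (ln (real N / real (k N))))" unfolding L_def by (simp add: exp_minus)
    also have "\<dots> = r N" unfolding r_def using kp Np by simp
    finally show ?case by simp
  qed
  have r0: "r \<longlonglongrightarrow> 0"
    using exp_neg_tendsto[of 1, OF _ Lt] r_eq by (simp add: tendsto_cong)
  have w0: "w \<longlonglongrightarrow> 0"
    unfolding w_def by (rule exp_neg_tendsto[OF _ Lt]) (use th1 in simp)
  have v0: "v \<longlonglongrightarrow> 0"
    unfolding v_def by (rule tendsto_divide_0[OF tendsto_const filterlim_at_top_imp_at_infinity[OF Lt]])
  have B0: "B \<longlonglongrightarrow> 0"
  proof -
    have "B \<longlonglongrightarrow> umax\<^sup>2 * (2 * 0 / (1 - 0) + (0 / \<delta>\<^sup>2 + real (card U) * (64 * exp (1/4) * 0 / (1 - 0))))"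
      unfolding B_def[abs_def] by (intro tendsto_intros w0 r0 v0) (use d in auto)
    then show ?thesis by simp
  qed
  have ev_good: "\<forall>\<^sub>F N in sequentially. ereal (- B N) \<le> excess U s2 N (k N) (xh N)"
  proof -
    have e1: "\<forall>\<^sub>F N in sequentially. 0 < L N" using Lt by (simp add: filterlim_at_top_dense)
    have "\<delta>\<^sup>2 / 4 > 0" using d by simp
    then have e2: "\<forall>\<^sub>F N in sequentially. v N < \<delta>\<^sup>2 / 4" by (rule order_tendstoD(2)[OF v0])
    have e3: "\<forall>\<^sub>F N in sequentially. w N < 1/32" by (rule order_tendstoD(2)[OF w0]) simp
    have e4: "\<forall>\<^sub>F N in sequentially. r N < 1/2" by (rule order_tendstoD(2)[OF r0]) simp
    show ?thesis using k_lt e1 e2 e3 e4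
    proof eventually_elim
      case (elim N)
      have k1: "1 \<le> k N" using k_ge1 by simp
      have vp: "v N > 0" unfolding v_def using elim s2_pos by simp
      have vd: "v N / \<delta>\<^sup>2 \<le> 1/4" using elim(3) d by (simp add: field_simps)
      define K where "K = exp ((umax\<^sup>2 / 2 + umax * \<delta>) / v N)"
      have K_eq: "K = exp (\<theta> * L N)"
        unfolding K_def \<theta>_def v_def using s2_pos elim(2) by (simp add: field_simps)
      have xm: "\<And>i. i < N \<Longrightarrow> (\<lambda>y. xh N y i) \<in> borel_measurable (LB N)" using xh_meas by simp
      define c where "c = umax\<^sup>2 * (2 * real (k N) * K / real (N - k N) + (v N / \<delta>\<^sup>2 + real (card U) * exp (real (k N) / 4 - real (N - k N) / (64 * K))))"
      have exc: "ereal (- c) \<le> excess U s2 N (k N) (xh N)"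
        by (rule excess_bound[OF U_fin Ub vp d vd k1 elim(1) K_def xm]) (auto simp: v_def L_def c_def)
      have pn1: "2 * real (k N) * K / real (N - k N) = 2 * w N / (1 - r N)"
        unfolding K_eq w_def r_def L_def by (rule per_N_real(1)[OF k1 elim(1)])
      have wle: "w N \<le> (1 - r N) / 16" using elim(4,5) by simp
      have pn2: "exp (real (k N) / 4 - real (N - k N) / (64 * K)) \<le> 64 * exp (1/4) * w N / (1 - r N)"
        using per_N_real(2)[OF k1 elim(1), of \<theta>] wle unfolding K_eq w_def r_def L_def by simp
      have "c \<le> B N"
        unfolding c_def B_def pn1 using pn2
        by (intro mult_left_mono add_left_mono mult_left_mono) auto
      then have "ereal (- B N) \<le> ereal (- c)" by simp
      then show ?case using exc by (rule order_trans)
    qed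
  qed
  have "liminf (\<lambda>N. ereal (- B N)) = ereal (- 0)"
  proof (rule lim_imp_Liminf)
    show "(\<lambda>N. ereal (- B N)) \<longlonglongrightarrow> ereal (- 0)" by (intro tendsto_ereal tendsto_minus B0)
  qed simp
  moreover have "liminf (\<lambda>N. ereal (- B N)) \<le> liminf (\<lambda>N. excess U s2 N (k N) (xh N))"
    by (rule Liminf_mono[OF ev_good])
  ultimately show ?thesis by (simp add: zero_ereal_def)
qed


end
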